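(* Let $(Y_i,X_i,Z_i)$, $i=1,\dots,n$, be i.i.d. copies of $(Y,X,Z)$ and suppose the null hypothesis $H_0: X\perp Y\mid Z$ holds. Let $M\ge 1$ be an integer, and suppose that, conditional on $(\mathbf x,\mathbf y,\mathbf Z)$, the vectors $\mathbf x^{(1)},\dots,\mathbf x^{(M)}\in\mathbb R^n$ are drawn i.i.d. from a distribution $Q(\cdot\mid \mathbf Z)$ that depends on the data only through $\mathbf Z$. Suppose that either (i) $Q(\cdot\mid\mathbf Z)$ equals the conditional distribution of $\mathbf x$ given $\mathbf Z$ (so each $\mathbf x^{(m)}$ is exchangeable with $\mathbf x$ given $\mathbf Z$); or (ii) $Q(\cdot\mid\mathbf Z)$ depends on $\mathbf Z$ only through $(g(\mathbf Z),h(\mathbf Z))$ and equals the conditional distribution of $\mathbf x$ given $(g(\mathbf Z),h(\mathbf Z))$ (so each $\mathbf x^{(m)}$ is exchangeable with $\mathbf x$ given $(g(\mathbf Z),h(\mathbf Z))$), and $\mathbf Z\perp \mathbf y\mid g(\mathbf Z)$. Then the Maxway CRT $p$-value $$p_{\mathrm{maxway}}(\mathbf D)=\frac{1}{M+1}\Big(1+\sum_{m=1}^M \mathbf 1\big\{T(\mathbf y,\mathbf x^{(m)},g(\mathbf Z),h(\mathbf Z))\ge T(\mathbf y,\mathbf x,g(\mathbf Z),h(\mathbf Z))\big\}\Big)$$ satisfies $\mathbb P(p_{\mathrm{maxway}}(\mathbf D)\le\alpha)\le\alpha$ for every $\alpha\in[0,1]$.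
   Context: $(Y,X,Z)$ is a random triple with $Y\in\mathbb R$, $X\in\mathbb R$, $Z\in\mathbb R^p$. Write $\mathbf y=(Y_1,\dots,Y_n)^\top$, $\mathbf x=(X_1,\dots,X_n)^\top$, $\mathbf Z$ the $n\times p$ matrix with rows $Z_i^\top$, and $\mathbf D=(\mathbf y,\mathbf x,\mathbf Z)$. $g$ and $h$ are fixed (non-random) measurable functions of $Z$ taking values in finite-dimensional Euclidean spaces; $g(\mathbf Z)=(g(Z_1),\dots,g(Z_n))$ and $h(\mathbf Z)=(h(Z_1),\dots,h(Z_n))$. $T(\mathbf y,\mathbf a,g(\mathbf Z),h(\mathbf Z))$ is a fixed measurable real-valued test statistic. *)

theory Defs
  imports "HOL-Probability.Probability"
begin

definition gen_sigma :: "'a measure \<Rightarrow> ('a \<Rightarrow> 'c) \<Rightarrow> 'c measure \<Rightarrow> 'a measure" where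
  "gen_sigma P Z MZ = vimage_algebra (space P) Z MZ"

definition cond_prob :: "'a measure \<Rightarrow> ('a \<Rightarrow> 'c) \<Rightarrow> 'c measure \<Rightarrow> ('a \<Rightarrow> bool) \<Rightarrow> 'a \<Rightarrow> real" where
  "cond_prob P Z MZ E = real_cond_exp P (gen_sigma P Z MZ) (\<lambda>\<omega>. of_bool (E \<omega>))"

definition cond_indep ::
  "'a measure \<Rightarrow> ('a \<Rightarrow> 'b) \<Rightarrow> 'b measure \<Rightarrow> ('a \<Rightarrow> 'd) \<Rightarrow> 'd measure
     \<Rightarrow> ('a \<Rightarrow> 'c) \<Rightarrow> 'c measure \<Rightarrow> bool" where
  "cond_indep P X MX Y MY Z MZ \<longleftrightarrow>
     (\<forall>A\<in>sets MX. \<forall>B\<in>sets MY. AE \<omega> in P.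
        cond_prob P Z MZ (\<lambda>\<omega>. X \<omega> \<in> A \<and> Y \<omega> \<in> B) \<omega>
        = cond_prob P Z MZ (\<lambda>\<omega>. X \<omega> \<in> A) \<omega> * cond_prob P Z MZ (\<lambda>\<omega>. Y \<omega> \<in> B) \<omega>)"

text \<open>Length-n vectors are represented as extensional functions on {..<n}.\<close>
definition vecM :: "nat \<Rightarrow> 'b measure \<Rightarrow> (nat \<Rightarrow> 'b) measure" where
  "vecM n MB = PiM {..<n} (\<lambda>_. MB)"

definition rvec :: "nat \<Rightarrow> (nat \<Rightarrow> 'a \<Rightarrow> 'b) \<Rightarrow> 'a \<Rightarrow> nat \<Rightarrow> 'b" where
  "rvec n F \<omega> = (\<lambda>i\<in>{..<n}. F i \<omega>)"

definition vmap :: "nat \<Rightarrow> ('b \<Rightarrow> 'c) \<Rightarrow> (nat \<Rightarrow> 'b) \<Rightarrow> nat \<Rightarrow> 'c" where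
  "vmap n g v = (\<lambda>i\<in>{..<n}. g (v i))"

definition p_maxway ::
  "nat \<Rightarrow> ((nat \<Rightarrow> real) \<Rightarrow> (nat \<Rightarrow> real) \<Rightarrow> (nat \<Rightarrow> 'g) \<Rightarrow> (nat \<Rightarrow> 'h) \<Rightarrow> real)
    \<Rightarrow> (nat \<Rightarrow> real) \<Rightarrow> (nat \<Rightarrow> real) \<Rightarrow> (nat \<Rightarrow> nat \<Rightarrow> real) \<Rightarrow> (nat \<Rightarrow> 'g) \<Rightarrow> (nat \<Rightarrow> 'h) \<Rightarrow> real" where
  "p_maxway Mc T y x xt gZ hZ =
     (1 + (\<Sum>m\<in>{1..Mc}. of_bool (T y (xt m) gZ hZ \<ge> T y x gZ hZ))) / (real Mc + 1)"

end

theory Submission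
  imports Defs
begin



context prob_space begin

lemma vim_subalg:
  assumes "V \<in> measurable M N"
  shows "subalgebra M (vimage_algebra (space M) V N)"
  unfolding subalgebra_def using assms
  by (auto simp: sets_vimage_algebra2 measurable_def)

lemma vim_sub:
  assumes "V \<in> measurable M N"
  shows "sigma_finite_subalgebra M (vimage_algebra (space M) V N)"
proof -
  interpret finite_measure_subalgebra M "vimage_algebra (space M) V N"
    using vim_subalg[OF assms] by unfold_locales
  show ?thesis by unfold_locales
qed

lemma vim_fmsub:
  assumes "V \<in> measurable M N"
  shows "finite_measure_subalgebra M (vimage_algebra (space M) V N)"
  using vim_subalg[OF assms] by unfold_locales

lemma vim_comp:
  assumes "V \<in> measurable M N" "u \<in> measurable N K"
  shows "(\<lambda>\<omega>. u (V \<omega>)) \<in> measurable (vimage_algebra (space M) V N) K"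
  using measurable_comp[OF measurable_vimage_algebra1 assms(2), of V "space M"] assms(1)
  by (auto simp: measurable_def o_def)

lemma vim_subalg2:
  assumes V: "V \<in> measurable M N" and W: "W \<in> measurable M K" and u: "u \<in> measurable N K"
    and eq: "\<And>\<omega>. \<omega> \<in> space M \<Longrightarrow> W \<omega> = u (V \<omega>)"
  shows "subalgebra (vimage_algebra (space M) V N) (vimage_algebra (space M) W K)"
  unfolding subalgebra_def
proof
  show "space (vimage_algebra (space M) W K) = space (vimage_algebra (space M) V N)" by simp
  show "sets (vimage_algebra (space M) W K) \<subseteq> sets (vimage_algebra (space M) V N)"
  proof
    fix S assume "S \<in> sets (vimage_algebra (space M) W K)"
    then obtain A where A: "A \<in> sets K" "S = W -` A \<inter> space M"
      using W by (auto simp: sets_vimage_algebra2 measurable_def)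
    have "S = V -` (u -` A \<inter> space N) \<inter> space M"
      using A eq V by (auto simp: measurable_def)
    moreover have "u -` A \<inter> space N \<in> sets N" using u A by (auto simp: measurable_def)
    ultimately have "S \<in> {V -` B \<inter> space M | B. B \<in> sets N}" by blast
    then show "S \<in> sets (vimage_algebra (space M) V N)"
      using V by (subst sets_vimage_algebra2) (auto simp: measurable_def)
  qed
qed

lemma vim_mono:
  assumes "V \<in> measurable M N" "W \<in> measurable M K" "u \<in> measurable N K"
    "\<And>\<omega>. \<omega> \<in> space M \<Longrightarrow> W \<omega> = u (V \<omega>)"
    "f \<in> measurable (vimage_algebra (space M) W K) L"
  shows "f \<in> measurable (vimage_algebra (space M) V N) L"
  using measurable_from_subalg[OF vim_subalg2[OF assms(1-4)] assms(5)] .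

lemma ind_int:
  fixes h :: "'a \<Rightarrow> real"
  assumes V: "V \<in> measurable M N" and h: "integrable M h" and S: "S \<in> sets N"
  shows "integrable M (\<lambda>\<omega>. indicator S (V \<omega>) * h \<omega>)"
proof -
  have pre: "V -` S \<inter> space M \<in> sets M" using V S by (auto simp: measurable_def)
  have "integrable M (\<lambda>\<omega>. indicator (V -` S \<inter> space M) \<omega> *\<^sub>R h \<omega>)"
    using pre h by (intro integrable_mult_indicator) auto
  moreover have "integrable M (\<lambda>\<omega>. indicator S (V \<omega>) * h \<omega>) \<longleftrightarrow> integrable M (\<lambda>\<omega>. indicator (V -` S \<inter> space M) \<omega> *\<^sub>R h \<omega>)"
    by (rule Bochner_Integration.integrable_cong) (auto simp: indicator_def)
  ultimately show ?thesis by simp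
qed

lemma emeas_dens:
  fixes h :: "'a \<Rightarrow> real"
  assumes V: "V \<in> measurable M N" and h: "integrable M h" "AE \<omega> in M. 0 \<le> h \<omega>"
    and S: "S \<in> sets N"
  shows "emeasure (distr (density M (\<lambda>\<omega>. ennreal (h \<omega>))) N V) S
       = ennreal (\<integral>\<omega>. indicator S (V \<omega>) * h \<omega> \<partial>M)"
proof -
  have hm: "h \<in> borel_measurable M" using h(1) by (rule borel_measurable_integrable)
  have hm': "(\<lambda>\<omega>. ennreal (h \<omega>)) \<in> borel_measurable M"
    using measurable_compose[OF hm measurable_ennreal] .
  have V': "V \<in> measurable (density M (\<lambda>\<omega>. ennreal (h \<omega>))) N"
    using V measurable_cong_sets[OF sets_density refl, of M "\<lambda>\<omega>. ennreal (h \<omega>)" N] by blast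
  have pre: "V -` S \<inter> space M \<in> sets M" using V S by (rule measurable_sets)
  have "emeasure (distr (density M (\<lambda>\<omega>. ennreal (h \<omega>))) N V) S
      = emeasure (density M (\<lambda>\<omega>. ennreal (h \<omega>))) (V -` S \<inter> space (density M (\<lambda>\<omega>. ennreal (h \<omega>))))"
    by (rule emeasure_distr[OF V' S])
  also have "\<dots> = emeasure (density M (\<lambda>\<omega>. ennreal (h \<omega>))) (V -` S \<inter> space M)"
    by (simp only: space_density)
  also have "\<dots> = (\<integral>\<^sup>+ \<omega>. ennreal (h \<omega>) * indicator (V -` S \<inter> space M) \<omega> \<partial>M)"
    by (rule emeasure_density[OF hm' pre])
  also have "\<dots> = (\<integral>\<^sup>+ \<omega>. ennreal (indicator S (V \<omega>) * h \<omega>) \<partial>M)"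
    by (intro nn_integral_cong) (simp add: indicator_def)
  also have "\<dots> = ennreal (\<integral>\<omega>. indicator S (V \<omega>) * h \<omega> \<partial>M)"
  proof (rule nn_integral_eq_integral)
    show "integrable M (\<lambda>\<omega>. indicator S (V \<omega>) * h \<omega>)" by (rule ind_int[OF V h(1) S])
    show "AE \<omega> in M. 0 \<le> indicator S (V \<omega>) * h \<omega>" using h(2) by eventually_elim simp
  qed
  finally show ?thesis .
qed

lemma ext_gen:
  fixes f g :: "'a \<Rightarrow> real"
  assumes V: "V \<in> measurable M N"
    and gen: "sets N = sigma_sets (space N) E" "Int_stable E" "E \<subseteq> Pow (space N)" "space N \<in> E"
    and f: "integrable M f" "AE \<omega> in M. 0 \<le> f \<omega>"
    and g: "integrable M g" "AE \<omega> in M. 0 \<le> g \<omega>"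
    and eq: "\<And>S. S \<in> E \<Longrightarrow> (\<integral>\<omega>. indicator S (V \<omega>) * f \<omega> \<partial>M) = (\<integral>\<omega>. indicator S (V \<omega>) * g \<omega> \<partial>M)"
    and S: "S \<in> sets N"
  shows "(\<integral>\<omega>. indicator S (V \<omega>) * f \<omega> \<partial>M) = (\<integral>\<omega>. indicator S (V \<omega>) * g \<omega> \<partial>M)"
proof -
  let ?mf = "distr (density M (\<lambda>\<omega>. ennreal (f \<omega>))) N V"
  let ?mg = "distr (density M (\<lambda>\<omega>. ennreal (g \<omega>))) N V"
  have "?mf = ?mg"
  proof (rule measure_eqI_generator_eq[OF gen(2) gen(3), of _ _ "\<lambda>_. space N"])
    fix X assume X: "X \<in> E"
    then have "X \<in> sets N" using gen(1) by auto
    then show "emeasure ?mf X = emeasure ?mg X"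
      using emeas_dens[OF V f] emeas_dens[OF V g] eq[OF X] by simp
  next
    show "sets ?mf = sigma_sets (space N) E" "sets ?mg = sigma_sets (space N) E" using gen(1) by auto
    show "range (\<lambda>_. space N) \<subseteq> E" using gen(4) by auto
    show "(\<Union>i::nat. space N) = space N" by simp
    show "emeasure ?mf (space N) \<noteq> \<infinity>" using emeas_dens[OF V f, of "space N"] by simp
  qed
  then have "ennreal (\<integral>\<omega>. indicator S (V \<omega>) * f \<omega> \<partial>M) = ennreal (\<integral>\<omega>. indicator S (V \<omega>) * g \<omega> \<partial>M)"
    using emeas_dens[OF V f S] emeas_dens[OF V g S] by simp
  moreover have "AE \<omega> in M. 0 \<le> indicator S (V \<omega>) * f \<omega>" using f(2) by eventually_elim auto
  then have "0 \<le> (\<integral>\<omega>. indicator S (V \<omega>) * f \<omega> \<partial>M)" by (rule integral_nonneg_AE)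
  moreover have "AE \<omega> in M. 0 \<le> indicator S (V \<omega>) * g \<omega>" using g(2) by eventually_elim auto
  then have "0 \<le> (\<integral>\<omega>. indicator S (V \<omega>) * g \<omega> \<partial>M)" by (rule integral_nonneg_AE)
  ultimately show ?thesis by simp
qed

lemma charact_gen:
  fixes f g :: "'a \<Rightarrow> real"
  assumes V: "V \<in> measurable M N"
    and gen: "sets N = sigma_sets (space N) E" "Int_stable E" "E \<subseteq> Pow (space N)" "space N \<in> E"
    and f: "integrable M f" "AE \<omega> in M. 0 \<le> f \<omega>"
    and g: "integrable M g" "AE \<omega> in M. 0 \<le> g \<omega>"
    and gm: "g \<in> borel_measurable (vimage_algebra (space M) V N)"
    and eq: "\<And>S. S \<in> E \<Longrightarrow> (\<integral>\<omega>. indicator S (V \<omega>) * f \<omega> \<partial>M) = (\<integral>\<omega>. indicator S (V \<omega>) * g \<omega> \<partial>M)"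
  shows "AE \<omega> in M. real_cond_exp M (vimage_algebra (space M) V N) f \<omega> = g \<omega>"
proof (rule sigma_finite_subalgebra.real_cond_exp_charact[OF vim_sub[OF V]])
  fix A assume "A \<in> sets (vimage_algebra (space M) V N)"
  then obtain S where S: "S \<in> sets N" "A = V -` S \<inter> space M"
    using V by (auto simp: sets_vimage_algebra2 measurable_def)
  have *: "\<And>h::'a\<Rightarrow>real. (\<integral>\<omega>\<in>A. h \<omega> \<partial>M) = (\<integral>\<omega>. indicator S (V \<omega>) * h \<omega> \<partial>M)"
    unfolding set_lebesgue_integral_def using S(2)
    by (intro Bochner_Integration.integral_cong) (auto simp: indicator_def)
  show "(\<integral>\<omega>\<in>A. f \<omega> \<partial>M) = (\<integral>\<omega>\<in>A. g \<omega> \<partial>M)"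
    unfolding * using ext_gen[OF V gen f g eq S(1)] .
qed (rule f(1) g(1) gm)+

end



lemma vec_gen:
  assumes "finite I"
  shows "sets (PiM I (\<lambda>_. N)) = sigma_sets (space (PiM I (\<lambda>_. N))) {PiE I A | A. \<forall>i\<in>I. A i \<in> sets N}"
    and "Int_stable {PiE I A | A. \<forall>i\<in>I. A i \<in> sets N}"
    and "{PiE I A | A. \<forall>i\<in>I. A i \<in> sets N} \<subseteq> Pow (space (PiM I (\<lambda>_. N)))"
    and "space (PiM I (\<lambda>_. N)) \<in> {PiE I A | A. \<forall>i\<in>I. A i \<in> sets N}"
proof -
  have eq: "{(\<Pi>\<^sub>E i\<in>I. X i) |X. (\<forall>i. X i \<in> sets N) \<and> finite {i. X i \<noteq> space N}}
      = {PiE I A | A. \<forall>i\<in>I. A i \<in> sets N}"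
  proof (intro equalityI subsetI)
    fix S assume "S \<in> {(\<Pi>\<^sub>E i\<in>I. X i) |X. (\<forall>i. X i \<in> sets N) \<and> finite {i. X i \<noteq> space N}}"
    then show "S \<in> {PiE I A | A. \<forall>i\<in>I. A i \<in> sets N}" by blast
  next
    fix S assume "S \<in> {PiE I A | A. \<forall>i\<in>I. A i \<in> sets N}"
    then obtain A where A: "S = PiE I A" "\<forall>i\<in>I. A i \<in> sets N" by blast
    define X where "X i = (if i \<in> I then A i else space N)" for i
    have "S = PiE I X" unfolding A X_def by (intro PiE_cong) auto
    moreover have "\<forall>i. X i \<in> sets N" using A(2) by (auto simp: X_def)
    moreover have "finite {i. X i \<noteq> space N}"
      by (rule finite_subset[OF _ assms]) (auto simp: X_def)
    ultimately show "S \<in> {(\<Pi>\<^sub>E i\<in>I. X i) |X. (\<forall>i. X i \<in> sets N) \<and> finite {i. X i \<noteq> space N}}"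
      by blast
  qed
  show "sets (PiM I (\<lambda>_. N)) = sigma_sets (space (PiM I (\<lambda>_. N))) {PiE I A | A. \<forall>i\<in>I. A i \<in> sets N}"
    using sets_PiM_finite[of I "\<lambda>_. N"] unfolding eq space_PiM by simp
  show "Int_stable {PiE I A | A. \<forall>i\<in>I. A i \<in> sets N}"
    using Int_stable_PiE[of I I "\<lambda>_. N"] by simp
  show "{PiE I A | A. \<forall>i\<in>I. A i \<in> sets N} \<subseteq> Pow (space (PiM I (\<lambda>_. N)))"
    using sets.sets_into_space[of _ N] by (auto simp: space_PiM PiE_iff)
  show "space (PiM I (\<lambda>_. N)) \<in> {PiE I A | A. \<forall>i\<in>I. A i \<in> sets N}"
    unfolding space_PiM by (intro CollectI exI[of _ "\<lambda>_. space N"]) auto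
qed

lemma ind_PiE_restrict:
  assumes "finite I"
  shows "indicator (PiE I A) (\<lambda>i\<in>I. F i) = (\<Prod>i\<in>I. indicator (A i) (F i) :: real)"
proof (cases "\<forall>i\<in>I. F i \<in> A i")
  case True
  then have "(\<Prod>i\<in>I. indicator (A i) (F i) :: real) = (\<Prod>i\<in>I. 1)"
    by (intro prod.cong) auto
  then show ?thesis using True by (simp add: indicator_def PiE_iff)
next
  case False
  then obtain j where j: "j \<in> I" "F j \<notin> A j" by blast
  then have "(\<Prod>i\<in>I. indicator (A i) (F i) :: real) = 0"
    using assms j by (intro prod_zero) (auto intro!: bexI[of _ j])
  then show ?thesis using j by (auto simp: indicator_def PiE_iff)
qed

context prob_space begin

lemma int_bdd:
  fixes k h :: "'a \<Rightarrow> real"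
  assumes h: "integrable M h" and k: "k \<in> borel_measurable M" and b: "AE \<omega> in M. \<bar>k \<omega>\<bar> \<le> 1"
  shows "integrable M (\<lambda>\<omega>. k \<omega> * h \<omega>)" "integrable M (\<lambda>\<omega>. h \<omega> * k \<omega>)"
proof -
  have hm: "h \<in> borel_measurable M" using h by (rule borel_measurable_integrable)
  have m: "(\<lambda>\<omega>. k \<omega> * h \<omega>) \<in> borel_measurable M" using k hm by (rule borel_measurable_times)
  have "AE \<omega> in M. norm (k \<omega> * h \<omega>) \<le> norm (h \<omega>)"
    using b by eventually_elim (simp add: abs_mult mult_left_le_one_le)
  then show i: "integrable M (\<lambda>\<omega>. k \<omega> * h \<omega>)" using Bochner_Integration.integrable_bound[OF h m] by blast
  show "integrable M (\<lambda>\<omega>. h \<omega> * k \<omega>)" using i by (simp add: mult.commute)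
qed

lemma int01:
  fixes f :: "'a \<Rightarrow> real"
  assumes "f \<in> borel_measurable M" "\<And>\<omega>. \<omega> \<in> space M \<Longrightarrow> \<bar>f \<omega>\<bar> \<le> 1"
  shows "integrable M f"
  by (rule integrable_const_bound[where B=1]) (use assms in auto)

lemma ce01:
  fixes f :: "'a \<Rightarrow> real"
  assumes F: "sigma_finite_subalgebra M F" and f: "f \<in> borel_measurable M"
    "\<And>\<omega>. \<omega> \<in> space M \<Longrightarrow> 0 \<le> f \<omega> \<and> f \<omega> \<le> 1"
  shows "AE \<omega> in M. 0 \<le> real_cond_exp M F f \<omega> \<and> real_cond_exp M F f \<omega> \<le> 1"
    "AE \<omega> in M. \<bar>real_cond_exp M F f \<omega>\<bar> \<le> 1"
    "integrable M (real_cond_exp M F f)"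
    "integrable M f"
    "real_cond_exp M F f \<in> borel_measurable F"
    "real_cond_exp M F f \<in> borel_measurable M"
proof -
  have int: "integrable M f" using f by (intro int01) auto
  have a: "AE \<omega> in M. 0 \<le> real_cond_exp M F f \<omega>"
    using sigma_finite_subalgebra.real_cond_exp_ge_c[OF F int, of 0] f(2) by auto
  have b: "AE \<omega> in M. real_cond_exp M F f \<omega> \<le> 1"
    using sigma_finite_subalgebra.real_cond_exp_le_c[OF F int, of 1] f(2) by auto
  show "AE \<omega> in M. 0 \<le> real_cond_exp M F f \<omega> \<and> real_cond_exp M F f \<omega> \<le> 1"
    using a b by eventually_elim auto
  then show "AE \<omega> in M. \<bar>real_cond_exp M F f \<omega>\<bar> \<le> 1" by eventually_elim auto
  show "integrable M (real_cond_exp M F f)" using sigma_finite_subalgebra.real_cond_exp_int(1)[OF F int] .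
  show "integrable M f" by (rule int)
  show "real_cond_exp M F f \<in> borel_measurable F" using borel_measurable_cond_exp .
  show "real_cond_exp M F f \<in> borel_measurable M" using borel_measurable_cond_exp2 .
qed

lemma ce_sym:
  fixes f g :: "'a \<Rightarrow> real"
  assumes F: "sigma_finite_subalgebra M F"
    and f: "f \<in> borel_measurable M" "\<And>\<omega>. \<omega> \<in> space M \<Longrightarrow> 0 \<le> f \<omega> \<and> f \<omega> \<le> 1"
    and g: "g \<in> borel_measurable M" "\<And>\<omega>. \<omega> \<in> space M \<Longrightarrow> 0 \<le> g \<omega> \<and> g \<omega> \<le> 1"
  shows "(\<integral>\<omega>. real_cond_exp M F f \<omega> * g \<omega> \<partial>M) = (\<integral>\<omega>. f \<omega> * real_cond_exp M F g \<omega> \<partial>M)"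
proof -
  note Ef = ce01[OF F f] and Eg = ce01[OF F g]
  have gb: "AE \<omega> in M. \<bar>g \<omega>\<bar> \<le> 1" "AE \<omega> in M. \<bar>f \<omega>\<bar> \<le> 1" using f(2) g(2) by auto
  have "(\<integral>\<omega>. real_cond_exp M F f \<omega> * g \<omega> \<partial>M) = (\<integral>\<omega>. real_cond_exp M F f \<omega> * real_cond_exp M F g \<omega> \<partial>M)"
    by (rule sigma_finite_subalgebra.real_cond_exp_intg(2)[OF F, symmetric])
       (use int_bdd(2)[OF Ef(3) g(1) gb(1)] Ef(5) g(1) in auto)
  also have "\<dots> = (\<integral>\<omega>. real_cond_exp M F g \<omega> * real_cond_exp M F f \<omega> \<partial>M)" by (simp add: mult.commute)
  also have "\<dots> = (\<integral>\<omega>. real_cond_exp M F g \<omega> * f \<omega> \<partial>M)"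
    by (rule sigma_finite_subalgebra.real_cond_exp_intg(2)[OF F])
       (use int_bdd(2)[OF Eg(3) f(1) gb(2)] Eg(5) f(1) in auto)
  also have "\<dots> = (\<integral>\<omega>. f \<omega> * real_cond_exp M F g \<omega> \<partial>M)" by (simp add: mult.commute)
  finally show ?thesis .
qed

lemma ind_int_prod:
  fixes \<phi> :: "'i \<Rightarrow> 'a \<Rightarrow> real"
  assumes fin: "finite I" and ind: "indep_vars (\<lambda>_. N) W I"
    and meas: "\<And>i. i \<in> I \<Longrightarrow> \<phi> i \<in> borel_measurable (vimage_algebra (space M) (W i) N)"
    and int: "\<And>i. i \<in> I \<Longrightarrow> integrable M (\<phi> i)"
  shows "(\<integral>\<omega>. (\<Prod>i\<in>I. \<phi> i \<omega>) \<partial>M) = (\<Prod>i\<in>I. \<integral>\<omega>. \<phi> i \<omega> \<partial>M)"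
    and "integrable M (\<lambda>\<omega>. \<Prod>i\<in>I. \<phi> i \<omega>)"
proof -
  have "indep_vars (\<lambda>_. borel) \<phi> I"
    unfolding indep_vars_def2
  proof
    show "\<forall>i\<in>I. random_variable borel (\<phi> i)" using int by auto
    have IW: "indep_sets (\<lambda>i. sigma_sets (space M) {W i -` A \<inter> space M | A. A \<in> sets N}) I"
      using ind unfolding indep_vars_def by blast
    show "indep_sets (\<lambda>i. {\<phi> i -` A \<inter> space M |A. A \<in> sets borel}) I"
    proof (rule indep_sets_mono_sets[OF IW])
      fix i assume i: "i \<in> I"
      show "{\<phi> i -` A \<inter> space M |A. A \<in> sets borel} \<subseteq> sigma_sets (space M) {W i -` A \<inter> space M | A. A \<in> sets N}"
      proof
        fix S assume "S \<in> {\<phi> i -` A \<inter> space M |A. A \<in> sets borel}"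
        then obtain A where A: "A \<in> sets borel" "S = \<phi> i -` A \<inter> space M" by blast
        have "\<phi> i -` A \<inter> space (vimage_algebra (space M) (W i) N) \<in> sets (vimage_algebra (space M) (W i) N)"
          using measurable_sets[OF meas[OF i] A(1)] .
        then show "S \<in> sigma_sets (space M) {W i -` A \<inter> space M | A. A \<in> sets N}"
          unfolding A(2) by (simp add: sets_vimage_algebra)
      qed
    qed
  qed
  then show "(\<integral>\<omega>. (\<Prod>i\<in>I. \<phi> i \<omega>) \<partial>M) = (\<Prod>i\<in>I. \<integral>\<omega>. \<phi> i \<omega> \<partial>M)"
    and "integrable M (\<lambda>\<omega>. \<Prod>i\<in>I. \<phi> i \<omega>)"
    using indep_vars_lebesgue_integral[OF fin _ int] indep_vars_integrable[OF fin _ int] by auto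
qed

end



context prob_space begin

lemma unit_ci:
  fixes X Y :: "'a \<Rightarrow> real" and Z :: "'a \<Rightarrow> 'z"
  assumes X[measurable]: "X \<in> borel_measurable M" and Y[measurable]: "Y \<in> borel_measurable M"
    and Z[measurable]: "Z \<in> measurable M MZ"
    and H: "cond_indep M X borel Y borel Z MZ"
    and A[measurable]: "A \<in> sets borel" and B[measurable]: "B \<in> sets borel" and C[measurable]: "C \<in> sets MZ"
  shows "(\<integral>\<omega>. indicator A (X \<omega>) * indicator B (Y \<omega>) * indicator C (Z \<omega>) \<partial>M)
       = (\<integral>\<omega>. cond_prob M Z MZ (\<lambda>\<omega>. X \<omega> \<in> A) \<omega> * indicator B (Y \<omega>) * indicator C (Z \<omega>) \<partial>M)"
proof -
  define F where "F = vimage_algebra (space M) Z MZ"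
  have Fs: "sigma_finite_subalgebra M F" unfolding F_def by (rule vim_sub[OF Z])
  define I where "I = (\<lambda>\<omega>. indicator C (Z \<omega>) :: real)"
  have IF: "I \<in> borel_measurable F" unfolding I_def F_def
    by (rule vim_comp[OF Z]) simp
  have IM[measurable]: "I \<in> borel_measurable M" unfolding I_def by measurable
  have Ib: "AE \<omega> in M. \<bar>I \<omega>\<bar> \<le> 1" by (auto simp: I_def indicator_def)
  define eA where "eA = (\<lambda>\<omega>. of_bool (X \<omega> \<in> A) :: real)"
  define eB where "eB = (\<lambda>\<omega>. of_bool (Y \<omega> \<in> B) :: real)"
  define eAB where "eAB = (\<lambda>\<omega>. of_bool (X \<omega> \<in> A \<and> Y \<omega> \<in> B) :: real)"
  have mA[measurable]: "eA \<in> borel_measurable M" and mB[measurable]: "eB \<in> borel_measurable M"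
    and mAB[measurable]: "eAB \<in> borel_measurable M"
    unfolding eA_def eB_def eAB_def by measurable
  have eA01: "\<And>\<omega>. \<omega> \<in> space M \<Longrightarrow> 0 \<le> eA \<omega> \<and> eA \<omega> \<le> 1" by (simp add: eA_def)
  have eB01: "\<And>\<omega>. \<omega> \<in> space M \<Longrightarrow> 0 \<le> eB \<omega> \<and> eB \<omega> \<le> 1" by (simp add: eB_def)
  have eAB01: "\<And>\<omega>. \<omega> \<in> space M \<Longrightarrow> 0 \<le> eAB \<omega> \<and> eAB \<omega> \<le> 1" by (simp add: eAB_def)
  define pA where "pA = real_cond_exp M F eA"
  define sB where "sB = real_cond_exp M F eB"
  define pAB where "pAB = real_cond_exp M F eAB"
  note cA = ce01[OF Fs mA eA01, folded pA_def] and cB = ce01[OF Fs mB eB01, folded sB_def]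
    and cAB = ce01[OF Fs mAB eAB01, folded pAB_def]
  have [measurable]: "pA \<in> borel_measurable M" "sB \<in> borel_measurable M" "pAB \<in> borel_measurable M"
    using cA(6) cB(6) cAB(6) by (simp_all only: pA_def sB_def pAB_def)
  have "AE \<omega> in M. cond_prob M Z MZ (\<lambda>\<omega>. X \<omega> \<in> A \<and> Y \<omega> \<in> B) \<omega>
        = cond_prob M Z MZ (\<lambda>\<omega>. X \<omega> \<in> A) \<omega> * cond_prob M Z MZ (\<lambda>\<omega>. Y \<omega> \<in> B) \<omega>"
    using H A B unfolding cond_indep_def by blast
  then have HAE: "AE \<omega> in M. pAB \<omega> = pA \<omega> * sB \<omega>"
    unfolding cond_prob_def gen_sigma_def pAB_def pA_def sB_def eA_def eB_def eAB_def F_def .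
  have "(\<integral>\<omega>. indicator A (X \<omega>) * indicator B (Y \<omega>) * indicator C (Z \<omega>) \<partial>M) = (\<integral>\<omega>. I \<omega> * eAB \<omega> \<partial>M)"
    by (intro Bochner_Integration.integral_cong) (auto simp: I_def eAB_def indicator_def)
  also have "\<dots> = (\<integral>\<omega>. I \<omega> * pAB \<omega> \<partial>M)" unfolding pAB_def
    by (rule sigma_finite_subalgebra.real_cond_exp_intg(2)[OF Fs int_bdd(1)[OF cAB(4) IM Ib] IF, symmetric])
       measurable
  also have "\<dots> = (\<integral>\<omega>. I \<omega> * (pA \<omega> * sB \<omega>) \<partial>M)"
    by (rule integral_cong_AE) (measurable, use HAE in eventually_elim, simp)
  also have "\<dots> = (\<integral>\<omega>. (I \<omega> * sB \<omega>) * pA \<omega> \<partial>M)" by (simp add: ac_simps)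
  also have "\<dots> = (\<integral>\<omega>. (I \<omega> * sB \<omega>) * eA \<omega> \<partial>M)" unfolding pA_def
  proof (rule sigma_finite_subalgebra.real_cond_exp_intg(2)[OF Fs])
    have "integrable M (\<lambda>\<omega>. I \<omega> * sB \<omega>)" using int_bdd(1)[OF cB(3) IM Ib] .
    then show "integrable M (\<lambda>\<omega>. I \<omega> * sB \<omega> * eA \<omega>)"
      by (rule int_bdd(2)) (auto simp: eA_def)
    show "(\<lambda>\<omega>. I \<omega> * sB \<omega>) \<in> borel_measurable F" using IF cB(5) by (rule borel_measurable_times)
  qed measurable
  finally have L: "(\<integral>\<omega>. indicator A (X \<omega>) * indicator B (Y \<omega>) * indicator C (Z \<omega>) \<partial>M)
      = (\<integral>\<omega>. (I \<omega> * sB \<omega>) * eA \<omega> \<partial>M)" .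
  have "(\<integral>\<omega>. cond_prob M Z MZ (\<lambda>\<omega>. X \<omega> \<in> A) \<omega> * indicator B (Y \<omega>) * indicator C (Z \<omega>) \<partial>M)
      = (\<integral>\<omega>. (I \<omega> * pA \<omega>) * eB \<omega> \<partial>M)"
    unfolding cond_prob_def gen_sigma_def pA_def eA_def F_def
    by (intro Bochner_Integration.integral_cong) (auto simp: I_def eB_def indicator_def)
  also have "\<dots> = (\<integral>\<omega>. (I \<omega> * pA \<omega>) * sB \<omega> \<partial>M)" unfolding sB_def
  proof (rule sigma_finite_subalgebra.real_cond_exp_intg(2)[OF Fs, symmetric])
    have "integrable M (\<lambda>\<omega>. I \<omega> * pA \<omega>)" using int_bdd(1)[OF cA(3) IM Ib] .
    then show "integrable M (\<lambda>\<omega>. I \<omega> * pA \<omega> * eB \<omega>)"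
      by (rule int_bdd(2)) (auto simp: eB_def)
    show "(\<lambda>\<omega>. I \<omega> * pA \<omega>) \<in> borel_measurable F" using IF cA(5) by (rule borel_measurable_times)
  qed measurable
  also have "\<dots> = (\<integral>\<omega>. (I \<omega> * sB \<omega>) * pA \<omega> \<partial>M)" by (simp add: ac_simps)
  also have "\<dots> = (\<integral>\<omega>. (I \<omega> * sB \<omega>) * eA \<omega> \<partial>M)" unfolding pA_def
  proof (rule sigma_finite_subalgebra.real_cond_exp_intg(2)[OF Fs])
    have "integrable M (\<lambda>\<omega>. I \<omega> * sB \<omega>)" using int_bdd(1)[OF cB(3) IM Ib] .
    then show "integrable M (\<lambda>\<omega>. I \<omega> * sB \<omega> * eA \<omega>)"
      by (rule int_bdd(2)) (auto simp: eA_def)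
    show "(\<lambda>\<omega>. I \<omega> * sB \<omega>) \<in> borel_measurable F" using IF cB(5) by (rule borel_measurable_times)
  qed measurable
  finally show ?thesis using L by simp
qed

end



locale vsetup = prob_space M for M :: "'a measure" +
  fixes n :: nat and Yv Xv :: "nat \<Rightarrow> 'a \<Rightarrow> real" and Zv :: "nat \<Rightarrow> 'a \<Rightarrow> 'z" and MZ :: "'z measure"
  assumes mY: "\<And>i. i < n \<Longrightarrow> Yv i \<in> borel_measurable M"
    and mX: "\<And>i. i < n \<Longrightarrow> Xv i \<in> borel_measurable M"
    and mZ: "\<And>i. i < n \<Longrightarrow> Zv i \<in> measurable M MZ"
    and ind: "indep_vars (\<lambda>_. borel \<Otimes>\<^sub>M borel \<Otimes>\<^sub>M MZ) (\<lambda>i \<omega>. (Yv i \<omega>, Xv i \<omega>, Zv i \<omega>)) {..<n}"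
    and H0: "\<And>i. i < n \<Longrightarrow> cond_indep M (Xv i) borel (Yv i) borel (Zv i) MZ"
begin

abbreviation "VX \<equiv> PiM {..<n} (\<lambda>_. borel :: real measure)"
abbreviation "VZ \<equiv> PiM {..<n} (\<lambda>_. MZ)"
abbreviation "N3 \<equiv> (borel :: real measure) \<Otimes>\<^sub>M (borel :: real measure) \<Otimes>\<^sub>M MZ"
definition "W i \<omega> = (Yv i \<omega>, Xv i \<omega>, Zv i \<omega>)"
definition "xx = rvec n Xv"
definition "yy = rvec n Yv"
definition "zz = rvec n Zv"
definition "qZ A = cond_prob M zz VZ (\<lambda>\<omega>. xx \<omega> \<in> A)"
definition "pp i A = cond_prob M (Zv i) MZ (\<lambda>\<omega>. Xv i \<omega> \<in> A)"

lemma mW: "i < n \<Longrightarrow> W i \<in> measurable M N3"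
  unfolding W_def using mX mY mZ by measurable

lemma mxx: "xx \<in> measurable M VX" unfolding xx_def rvec_def
  by (rule measurable_restrict) (use mX in auto)
lemma myy: "yy \<in> measurable M VX" unfolding yy_def rvec_def
  by (rule measurable_restrict) (use mY in auto)
lemma mzz: "zz \<in> measurable M VZ" unfolding zz_def rvec_def
  by (rule measurable_restrict) (use mZ in auto)

lemma indW: "indep_vars (\<lambda>_. N3) W {..<n}"
  using ind unfolding W_def[abs_def] .

lemma pp_props:
  assumes i: "i < n" and A: "A \<in> sets borel"
  shows "pp i A \<in> borel_measurable (vimage_algebra (space M) (Zv i) MZ)"
    "pp i A \<in> borel_measurable (vimage_algebra (space M) (W i) N3)"
    "pp i A \<in> borel_measurable (vimage_algebra (space M) zz VZ)"
    "pp i A \<in> borel_measurable M"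
    "integrable M (pp i A)"
    "AE \<omega> in M. 0 \<le> pp i A \<omega> \<and> pp i A \<omega> \<le> 1"
    "AE \<omega> in M. \<bar>pp i A \<omega>\<bar> \<le> 1"
proof -
  have Fs: "sigma_finite_subalgebra M (vimage_algebra (space M) (Zv i) MZ)" by (rule vim_sub[OF mZ[OF i]])
  have m: "(\<lambda>\<omega>. of_bool (Xv i \<omega> \<in> A) :: real) \<in> borel_measurable M" using mX[OF i] A by measurable
  note c = ce01[OF Fs m, folded pp_def cond_prob_def gen_sigma_def]
  have c': "AE \<omega> in M. 0 \<le> pp i A \<omega> \<and> pp i A \<omega> \<le> 1" "AE \<omega> in M. \<bar>pp i A \<omega>\<bar> \<le> 1"
    "integrable M (pp i A)" "pp i A \<in> borel_measurable (vimage_algebra (space M) (Zv i) MZ)"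
    "pp i A \<in> borel_measurable M"
    using c unfolding pp_def cond_prob_def gen_sigma_def by auto
  then show "pp i A \<in> borel_measurable (vimage_algebra (space M) (Zv i) MZ)"
    "pp i A \<in> borel_measurable M" "integrable M (pp i A)"
    "AE \<omega> in M. 0 \<le> pp i A \<omega> \<and> pp i A \<omega> \<le> 1" "AE \<omega> in M. \<bar>pp i A \<omega>\<bar> \<le> 1" by auto
  show "pp i A \<in> borel_measurable (vimage_algebra (space M) (W i) N3)"
    by (rule vim_mono[OF mW[OF i] mZ[OF i] _ _ c'(4), of "\<lambda>t. snd (snd t)"]) (auto simp: W_def)
  show "pp i A \<in> borel_measurable (vimage_algebra (space M) zz VZ)"
    by (rule vim_mono[OF mzz mZ[OF i] _ _ c'(4), of "\<lambda>v. v i"]) (use i in \<open>auto simp: zz_def rvec_def\<close>)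
qed

lemma mW_comp:
  assumes i: "i < n" and u: "u \<in> borel_measurable N3"
  shows "(\<lambda>\<omega>. u (Yv i \<omega>, Xv i \<omega>, Zv i \<omega>)) \<in> borel_measurable (vimage_algebra (space M) (W i) N3)"
  using vim_comp[OF mW[OF i] u] unfolding W_def .

lemma meas_sub_W: "i < n \<Longrightarrow> f \<in> borel_measurable (vimage_algebra (space M) (W i) N3) \<Longrightarrow> f \<in> borel_measurable M"
  by (rule measurable_from_subalg[OF vim_subalg[OF mW]])

lemma ind3_W:
  assumes i: "i < n" and A: "A \<in> sets borel" and B: "B \<in> sets borel" and C: "C \<in> sets MZ"
  shows "(\<lambda>\<omega>. indicator A (Xv i \<omega>) * indicator B (Yv i \<omega>) * indicator C (Zv i \<omega>) :: real)
           \<in> borel_measurable (vimage_algebra (space M) (W i) N3)"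
proof -
  have "(\<lambda>t. indicator A (fst (snd t)) * indicator B (fst t) * indicator C (snd (snd t)) :: real) \<in> borel_measurable N3"
    using A B C by measurable
  from mW_comp[OF i this] show ?thesis by simp
qed

lemma unit1:
  assumes i: "i < n" and A: "A \<in> sets borel" and B: "B \<in> sets borel" and C: "C \<in> sets MZ"
  shows "(\<integral>\<omega>. indicator A (Xv i \<omega>) * indicator B (Yv i \<omega>) * indicator C (Zv i \<omega>) \<partial>M)
       = (\<integral>\<omega>. pp i A \<omega> * indicator B (Yv i \<omega>) * indicator C (Zv i \<omega>) \<partial>M)"
  unfolding pp_def by (rule unit_ci[OF mX[OF i] mY[OF i] mZ[OF i] H0[OF i] A B C])

lemma claimB:
  assumes A: "\<And>i. i < n \<Longrightarrow> A i \<in> sets borel"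
  shows "AE \<omega> in M. qZ (PiE {..<n} A) \<omega> = (\<Prod>i<n. pp i (A i) \<omega>)"
proof -
  have fm: "(\<lambda>\<omega>. of_bool (xx \<omega> \<in> PiE {..<n} A) :: real) \<in> borel_measurable M"
  proof -
    have "PiE {..<n} A \<in> sets VX" using A by (intro sets_PiM_I_finite) auto
    then show ?thesis using mxx by measurable
  qed
  have gi: "integrable M (\<lambda>\<omega>. \<Prod>i<n. pp i (A i) \<omega>)"
    by (rule ind_int_prod(2)[OF finite_lessThan indW]) (use pp_props A in auto)
  have "AE \<omega> in M. real_cond_exp M (vimage_algebra (space M) zz VZ) (\<lambda>\<omega>. of_bool (xx \<omega> \<in> PiE {..<n} A)) \<omega>
      = (\<Prod>i<n. pp i (A i) \<omega>)"
  proof (rule charact_gen[OF mzz vec_gen[OF finite_lessThan]])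
    show "integrable M (\<lambda>\<omega>. of_bool (xx \<omega> \<in> PiE {..<n} A) :: real)" using fm by (rule int01) auto
    show "AE \<omega> in M. 0 \<le> (of_bool (xx \<omega> \<in> PiE {..<n} A) :: real)" by simp
    show "integrable M (\<lambda>\<omega>. \<Prod>i<n. pp i (A i) \<omega>)" by (rule gi)
    have "AE \<omega> in M. \<forall>i\<in>{..<n}. 0 \<le> pp i (A i) \<omega> \<and> pp i (A i) \<omega> \<le> 1"
      by (rule AE_finite_allI) (use pp_props(6) A in auto)
    then show "AE \<omega> in M. 0 \<le> (\<Prod>i<n. pp i (A i) \<omega>)"
      by eventually_elim (auto intro: prod_nonneg)
    show "(\<lambda>\<omega>. \<Prod>i<n. pp i (A i) \<omega>) \<in> borel_measurable (vimage_algebra (space M) zz VZ)"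
      by (rule borel_measurable_prod) (use pp_props(3) A in auto)
  next
    fix S assume "S \<in> {PiE {..<n} C | C. \<forall>i\<in>{..<n}. C i \<in> sets MZ}"
    then obtain C where S: "S = PiE {..<n} C" and C: "\<And>i. i < n \<Longrightarrow> C i \<in> sets MZ" by blast
    have pw: "indicator S (zz \<omega>) * of_bool (xx \<omega> \<in> PiE {..<n} A)
        = (\<Prod>i<n. indicator (A i) (Xv i \<omega>) * indicator UNIV (Yv i \<omega>) * indicator (C i) (Zv i \<omega>) :: real)" for \<omega>
    proof -
      have "indicator S (zz \<omega>) = (\<Prod>i<n. indicator (C i) (Zv i \<omega>) :: real)"
        unfolding S zz_def rvec_def by (rule ind_PiE_restrict) simp
      moreover have "(of_bool (xx \<omega> \<in> PiE {..<n} A) :: real) = indicator (PiE {..<n} A) (xx \<omega>)"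
        by (simp add: indicator_def)
      moreover have "\<dots> = (\<Prod>i<n. indicator (A i) (Xv i \<omega>))"
        unfolding xx_def rvec_def by (rule ind_PiE_restrict) simp
      ultimately show ?thesis
        by (simp add: prod.distrib mult.commute)
    qed
    have "(\<integral>\<omega>. indicator S (zz \<omega>) * of_bool (xx \<omega> \<in> PiE {..<n} A) \<partial>M)
        = (\<integral>\<omega>. (\<Prod>i<n. indicator (A i) (Xv i \<omega>) * indicator UNIV (Yv i \<omega>) * indicator (C i) (Zv i \<omega>) :: real) \<partial>M)"
      by (rule Bochner_Integration.integral_cong[OF refl]) (rule pw)
    also have "\<dots> = (\<Prod>i<n. \<integral>\<omega>. (indicator (A i) (Xv i \<omega>) * indicator UNIV (Yv i \<omega>) * indicator (C i) (Zv i \<omega>) :: real) \<partial>M)"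
    proof (rule ind_int_prod(1)[OF finite_lessThan indW])
      fix i assume i: "i \<in> {..<n}"
      show "(\<lambda>\<omega>. indicator (A i) (Xv i \<omega>) * indicator UNIV (Yv i \<omega>) * indicator (C i) (Zv i \<omega>) :: real)
           \<in> borel_measurable (vimage_algebra (space M) (W i) N3)"
        using i A C by (intro ind3_W) auto
      then show "integrable M (\<lambda>\<omega>. indicator (A i) (Xv i \<omega>) * indicator UNIV (Yv i \<omega>) * indicator (C i) (Zv i \<omega>) :: real)"
        using i by (intro int01 meas_sub_W) (auto simp: indicator_def)
    qed
    also have "\<dots> = (\<Prod>i<n. \<integral>\<omega>. (pp i (A i) \<omega> * indicator UNIV (Yv i \<omega>) * indicator (C i) (Zv i \<omega>) :: real) \<partial>M)"
      by (rule prod.cong[OF refl], rule unit1) (use A C in auto)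
    also have "\<dots> = (\<integral>\<omega>. (\<Prod>i<n. pp i (A i) \<omega> * indicator UNIV (Yv i \<omega>) * indicator (C i) (Zv i \<omega>) :: real) \<partial>M)"
    proof (rule ind_int_prod(1)[OF finite_lessThan indW, symmetric])
      fix i assume i: "i \<in> {..<n}"
      have m1: "(\<lambda>\<omega>. indicator UNIV (Yv i \<omega>) * indicator (C i) (Zv i \<omega>) :: real) \<in> borel_measurable (vimage_algebra (space M) (W i) N3)"
      proof -
        have "(\<lambda>t. indicator UNIV (fst t) * indicator (C i) (snd (snd t)) :: real) \<in> borel_measurable N3"
        proof -
          have Ci[measurable]: "C i \<in> sets MZ" using C i by auto
          show ?thesis by measurable
        qed
        from mW_comp[OF _ this] i show ?thesis by simp
      qed
      have "(\<lambda>\<omega>. pp i (A i) \<omega> * (indicator UNIV (Yv i \<omega>) * indicator (C i) (Zv i \<omega>)) :: real) \<in> borel_measurable (vimage_algebra (space M) (W i) N3)"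
        using pp_props(2)[of i "A i"] m1 i A by (intro borel_measurable_times) auto
      then show "(\<lambda>\<omega>. pp i (A i) \<omega> * indicator UNIV (Yv i \<omega>) * indicator (C i) (Zv i \<omega>)) \<in> borel_measurable (vimage_algebra (space M) (W i) N3)"
        by (simp add: mult.assoc)
      have "integrable M (\<lambda>\<omega>. pp i (A i) \<omega> * (indicator UNIV (Yv i \<omega>) * indicator (C i) (Zv i \<omega>)) :: real)"
        using i A by (intro int_bdd(2) pp_props(5) meas_sub_W[OF _ m1]) (auto simp: indicator_def)
      then show "integrable M (\<lambda>\<omega>. pp i (A i) \<omega> * indicator UNIV (Yv i \<omega>) * indicator (C i) (Zv i \<omega>))"
        by (simp add: mult.assoc)
    qed
    also have "\<dots> = (\<integral>\<omega>. indicator S (zz \<omega>) * (\<Prod>i<n. pp i (A i) \<omega>) \<partial>M)"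
    proof (rule Bochner_Integration.integral_cong[OF refl])
      fix \<omega> assume "\<omega> \<in> space M"
      have "indicator S (zz \<omega>) = (\<Prod>i<n. indicator (C i) (Zv i \<omega>) :: real)"
        unfolding S zz_def rvec_def by (rule ind_PiE_restrict) simp
      then show "(\<Prod>i<n. pp i (A i) \<omega> * indicator UNIV (Yv i \<omega>) * indicator (C i) (Zv i \<omega>))
          = indicator S (zz \<omega>) * (\<Prod>i<n. pp i (A i) \<omega>)"
        by (simp add: prod.distrib mult.commute)
    qed
    finally show "(\<integral>\<omega>. indicator S (zz \<omega>) * of_bool (xx \<omega> \<in> PiE {..<n} A) \<partial>M)
        = (\<integral>\<omega>. indicator S (zz \<omega>) * (\<Prod>i<n. pp i (A i) \<omega>) \<partial>M)" .
  qed
  then show ?thesis unfolding qZ_def cond_prob_def gen_sigma_def .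
qed

end



context vsetup begin

lemma ppBC_W:
  assumes i: "i < n" and A: "A \<in> sets borel" and B: "B \<in> sets borel" and C: "C \<in> sets MZ"
  shows "(\<lambda>\<omega>. pp i A \<omega> * indicator B (Yv i \<omega>) * indicator C (Zv i \<omega>) :: real)
           \<in> borel_measurable (vimage_algebra (space M) (W i) N3)"
    "integrable M (\<lambda>\<omega>. pp i A \<omega> * indicator B (Yv i \<omega>) * indicator C (Zv i \<omega>) :: real)"
proof -
  have m1: "(\<lambda>\<omega>. indicator B (Yv i \<omega>) * indicator C (Zv i \<omega>) :: real) \<in> borel_measurable (vimage_algebra (space M) (W i) N3)"
  proof -
    have "(\<lambda>t. indicator B (fst t) * indicator C (snd (snd t)) :: real) \<in> borel_measurable N3"
      using B C by measurable
    from mW_comp[OF i this] show ?thesis by simp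
  qed
  have "(\<lambda>\<omega>. pp i A \<omega> * (indicator B (Yv i \<omega>) * indicator C (Zv i \<omega>)) :: real) \<in> borel_measurable (vimage_algebra (space M) (W i) N3)"
    using pp_props(2)[OF i A] m1 by (rule borel_measurable_times)
  then show "(\<lambda>\<omega>. pp i A \<omega> * indicator B (Yv i \<omega>) * indicator C (Zv i \<omega>) :: real) \<in> borel_measurable (vimage_algebra (space M) (W i) N3)"
    by (simp add: mult.assoc)
  have "integrable M (\<lambda>\<omega>. pp i A \<omega> * (indicator B (Yv i \<omega>) * indicator C (Zv i \<omega>)) :: real)"
    using i A by (intro int_bdd(2) pp_props(5) meas_sub_W[OF _ m1]) (auto simp: indicator_def)
  then show "integrable M (\<lambda>\<omega>. pp i A \<omega> * indicator B (Yv i \<omega>) * indicator C (Zv i \<omega>) :: real)"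
    by (simp add: mult.assoc)
qed

lemma ind3_int:
  assumes i: "i < n" and A: "A \<in> sets borel" and B: "B \<in> sets borel" and C: "C \<in> sets MZ"
  shows "integrable M (\<lambda>\<omega>. indicator A (Xv i \<omega>) * indicator B (Yv i \<omega>) * indicator C (Zv i \<omega>) :: real)"
  using ind3_W[OF assms] i by (intro int01 meas_sub_W) (auto simp: indicator_def)

lemma qZ_meas: "qZ A \<in> borel_measurable M" "qZ A \<in> borel_measurable (vimage_algebra (space M) zz VZ)"
  unfolding qZ_def cond_prob_def gen_sigma_def by (rule borel_measurable_cond_exp2, rule borel_measurable_cond_exp)

lemma qZ_props:
  assumes A: "A \<in> sets VX"
  shows "integrable M (qZ A)" "AE \<omega> in M. 0 \<le> qZ A \<omega> \<and> qZ A \<omega> \<le> 1" "AE \<omega> in M. \<bar>qZ A \<omega>\<bar> \<le> 1"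
proof -
  have Fs: "sigma_finite_subalgebra M (vimage_algebra (space M) zz VZ)" by (rule vim_sub[OF mzz])
  have m: "(\<lambda>\<omega>. of_bool (xx \<omega> \<in> A) :: real) \<in> borel_measurable M" using mxx A by measurable
  note c = ce01[OF Fs m]
  show "integrable M (qZ A)" "AE \<omega> in M. 0 \<le> qZ A \<omega> \<and> qZ A \<omega> \<le> 1" "AE \<omega> in M. \<bar>qZ A \<omega>\<bar> \<le> 1"
    using c unfolding qZ_def cond_prob_def gen_sigma_def by auto
qed

lemma vec_rect:
  assumes A: "\<And>i. i < n \<Longrightarrow> A i \<in> sets borel" and B: "\<And>i. i < n \<Longrightarrow> B i \<in> sets borel"
    and C: "\<And>i. i < n \<Longrightarrow> C i \<in> sets MZ"
  shows "(\<integral>\<omega>. (indicator (PiE {..<n} A) (xx \<omega>) * indicator (PiE {..<n} B) (yy \<omega>) * indicator (PiE {..<n} C) (zz \<omega>) :: real) \<partial>M)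
       = (\<integral>\<omega>. (qZ (PiE {..<n} A) \<omega> * indicator (PiE {..<n} B) (yy \<omega>) * indicator (PiE {..<n} C) (zz \<omega>) :: real) \<partial>M)"
proof -
  have rx: "indicator (PiE {..<n} A) (xx \<omega>) = (\<Prod>i<n. indicator (A i) (Xv i \<omega>) :: real)" for \<omega>
    unfolding xx_def rvec_def by (rule ind_PiE_restrict) simp
  have ry: "indicator (PiE {..<n} B) (yy \<omega>) = (\<Prod>i<n. indicator (B i) (Yv i \<omega>) :: real)" for \<omega>
    unfolding yy_def rvec_def by (rule ind_PiE_restrict) simp
  have rz: "indicator (PiE {..<n} C) (zz \<omega>) = (\<Prod>i<n. indicator (C i) (Zv i \<omega>) :: real)" for \<omega>
    unfolding zz_def rvec_def by (rule ind_PiE_restrict) simp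
  have "(\<integral>\<omega>. (indicator (PiE {..<n} A) (xx \<omega>) * indicator (PiE {..<n} B) (yy \<omega>) * indicator (PiE {..<n} C) (zz \<omega>) :: real) \<partial>M)
      = (\<integral>\<omega>. (\<Prod>i<n. indicator (A i) (Xv i \<omega>) * indicator (B i) (Yv i \<omega>) * indicator (C i) (Zv i \<omega>) :: real) \<partial>M)"
    unfolding rx ry rz by (simp add: prod.distrib)
  also have "\<dots> = (\<Prod>i<n. \<integral>\<omega>. (indicator (A i) (Xv i \<omega>) * indicator (B i) (Yv i \<omega>) * indicator (C i) (Zv i \<omega>) :: real) \<partial>M)"
    by (rule ind_int_prod(1)[OF finite_lessThan indW]) (use ind3_W ind3_int A B C in auto)
  also have "\<dots> = (\<Prod>i<n. \<integral>\<omega>. (pp i (A i) \<omega> * indicator (B i) (Yv i \<omega>) * indicator (C i) (Zv i \<omega>) :: real) \<partial>M)"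
    by (rule prod.cong[OF refl], rule unit1) (use A B C in auto)
  also have "\<dots> = (\<integral>\<omega>. (\<Prod>i<n. pp i (A i) \<omega> * indicator (B i) (Yv i \<omega>) * indicator (C i) (Zv i \<omega>) :: real) \<partial>M)"
    by (rule ind_int_prod(1)[OF finite_lessThan indW, symmetric]) (use ppBC_W A B C in auto)
  also have "\<dots> = (\<integral>\<omega>. ((\<Prod>i<n. pp i (A i) \<omega>) * indicator (PiE {..<n} B) (yy \<omega>) * indicator (PiE {..<n} C) (zz \<omega>) :: real) \<partial>M)"
    unfolding ry rz by (simp add: prod.distrib)
  also have "\<dots> = (\<integral>\<omega>. (qZ (PiE {..<n} A) \<omega> * indicator (PiE {..<n} B) (yy \<omega>) * indicator (PiE {..<n} C) (zz \<omega>) :: real) \<partial>M)"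
  proof (rule integral_cong_AE)
    have sB: "PiE {..<n} B \<in> sets VX" using B by (intro sets_PiM_I_finite) auto
    have sC: "PiE {..<n} C \<in> sets VZ" using C by (intro sets_PiM_I_finite) auto
    have mp: "(\<lambda>\<omega>. \<Prod>i<n. pp i (A i) \<omega>) \<in> borel_measurable M"
      by (rule borel_measurable_prod) (use pp_props(4) A in auto)
    show "(\<lambda>\<omega>. ((\<Prod>i<n. pp i (A i) \<omega>) * indicator (PiE {..<n} B) (yy \<omega>) * indicator (PiE {..<n} C) (zz \<omega>) :: real)) \<in> borel_measurable M"
      using mp myy mzz sB sC by measurable
    show "(\<lambda>\<omega>. (qZ (PiE {..<n} A) \<omega> * indicator (PiE {..<n} B) (yy \<omega>) * indicator (PiE {..<n} C) (zz \<omega>) :: real)) \<in> borel_measurable M"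
      using qZ_meas(1) myy mzz sB sC by measurable
    show "AE \<omega> in M. (\<Prod>i<n. pp i (A i) \<omega>) * indicator (PiE {..<n} B) (yy \<omega>) * indicator (PiE {..<n} C) (zz \<omega>)
        = qZ (PiE {..<n} A) \<omega> * indicator (PiE {..<n} B) (yy \<omega>) * indicator (PiE {..<n} C) (zz \<omega>)"
    proof -
      have "AE \<omega> in M. qZ (PiE {..<n} A) \<omega> = (\<Prod>i<n. pp i (A i) \<omega>)" by (rule claimB) (rule A)
      then show ?thesis by eventually_elim simp
    qed
  qed
  finally show ?thesis .
qed

end



context vsetup begin

abbreviation "RX \<equiv> {PiE {..<n} A | A. \<forall>i\<in>{..<n}. A i \<in> sets (borel :: real measure)}"
abbreviation "RZ \<equiv> {PiE {..<n} A | A. \<forall>i\<in>{..<n}. A i \<in> sets MZ}"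

lemma ind_meas_x: assumes "A \<in> sets VX" shows "(\<lambda>\<omega>. indicator A (xx \<omega>) :: real) \<in> borel_measurable M"
  using mxx assms by measurable
lemma ind_meas_y: assumes "A \<in> sets VX" shows "(\<lambda>\<omega>. indicator A (yy \<omega>) :: real) \<in> borel_measurable M"
  using myy assms by measurable
lemma ind_meas_z: assumes "A \<in> sets VZ" shows "(\<lambda>\<omega>. indicator A (zz \<omega>) :: real) \<in> borel_measurable M"
  using mzz assms by measurable

lemma ext_C:
  assumes A: "A \<in> RX" and B: "B \<in> RX" and C: "C \<in> sets VZ"
  shows "(\<integral>\<omega>. (indicator A (xx \<omega>) * indicator B (yy \<omega>) * indicator C (zz \<omega>) :: real) \<partial>M)
       = (\<integral>\<omega>. (qZ A \<omega> * indicator B (yy \<omega>) * indicator C (zz \<omega>) :: real) \<partial>M)"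
proof -
  obtain Ai where Ai: "A = PiE {..<n} Ai" "\<And>i. i < n \<Longrightarrow> Ai i \<in> sets borel" using A by auto
  obtain Bi where Bi: "B = PiE {..<n} Bi" "\<And>i. i < n \<Longrightarrow> Bi i \<in> sets borel" using B by auto
  have sA: "A \<in> sets VX" using Ai by (auto intro!: sets_PiM_I_finite)
  have sB: "B \<in> sets VX" using Bi by (auto intro!: sets_PiM_I_finite)
  have fm: "(\<lambda>\<omega>. indicator A (xx \<omega>) * indicator B (yy \<omega>) :: real) \<in> borel_measurable M"
    using ind_meas_x[OF sA] ind_meas_y[OF sB] by (rule borel_measurable_times)
  have "(\<integral>\<omega>. indicator C (zz \<omega>) * (indicator A (xx \<omega>) * indicator B (yy \<omega>)) \<partial>M)
      = (\<integral>\<omega>. indicator C (zz \<omega>) * (qZ A \<omega> * indicator B (yy \<omega>)) \<partial>M)"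
  proof (rule ext_gen[OF mzz vec_gen[OF finite_lessThan] _ _ _ _ _ C])
    show "integrable M (\<lambda>\<omega>. indicator A (xx \<omega>) * indicator B (yy \<omega>) :: real)"
      using fm by (rule int01) (auto simp: indicator_def)
    show "AE \<omega> in M. 0 \<le> (indicator A (xx \<omega>) * indicator B (yy \<omega>) :: real)" by simp
    show "integrable M (\<lambda>\<omega>. qZ A \<omega> * indicator B (yy \<omega>))"
      using qZ_props(1)[OF sA] ind_meas_y[OF sB] by (rule int_bdd(2)) (auto simp: indicator_def)
    show "AE \<omega> in M. 0 \<le> qZ A \<omega> * indicator B (yy \<omega>)"
      using qZ_props(2)[OF sA] by eventually_elim simp
  next
    fix S assume "S \<in> RZ"
    then obtain Ci where Ci: "S = PiE {..<n} Ci" "\<And>i. i < n \<Longrightarrow> Ci i \<in> sets MZ" by auto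
    have "(\<integral>\<omega>. (indicator A (xx \<omega>) * indicator B (yy \<omega>) * indicator S (zz \<omega>) :: real) \<partial>M)
       = (\<integral>\<omega>. (qZ A \<omega> * indicator B (yy \<omega>) * indicator S (zz \<omega>) :: real) \<partial>M)"
      unfolding Ai(1) Bi(1) Ci(1) by (rule vec_rect) (use Ai Bi Ci in auto)
    then show "(\<integral>\<omega>. indicator S (zz \<omega>) * (indicator A (xx \<omega>) * indicator B (yy \<omega>)) \<partial>M)
      = (\<integral>\<omega>. indicator S (zz \<omega>) * (qZ A \<omega> * indicator B (yy \<omega>)) \<partial>M)"
      by (simp add: ac_simps)
  qed
  then show ?thesis by (simp add: ac_simps)
qed

lemma ext_B:
  assumes A: "A \<in> RX" and B: "B \<in> sets VX" and C: "C \<in> sets VZ"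
  shows "(\<integral>\<omega>. (indicator A (xx \<omega>) * indicator B (yy \<omega>) * indicator C (zz \<omega>) :: real) \<partial>M)
       = (\<integral>\<omega>. (qZ A \<omega> * indicator B (yy \<omega>) * indicator C (zz \<omega>) :: real) \<partial>M)"
proof -
  obtain Ai where Ai: "A = PiE {..<n} Ai" "\<And>i. i < n \<Longrightarrow> Ai i \<in> sets borel" using A by auto
  have sA: "A \<in> sets VX" using Ai by (auto intro!: sets_PiM_I_finite)
  have fm: "(\<lambda>\<omega>. indicator A (xx \<omega>) * indicator C (zz \<omega>) :: real) \<in> borel_measurable M"
    using ind_meas_x[OF sA] ind_meas_z[OF C] by (rule borel_measurable_times)
  have "(\<integral>\<omega>. indicator B (yy \<omega>) * (indicator A (xx \<omega>) * indicator C (zz \<omega>)) \<partial>M)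
      = (\<integral>\<omega>. indicator B (yy \<omega>) * (qZ A \<omega> * indicator C (zz \<omega>)) \<partial>M)"
  proof (rule ext_gen[OF myy vec_gen[OF finite_lessThan] _ _ _ _ _ B])
    show "integrable M (\<lambda>\<omega>. indicator A (xx \<omega>) * indicator C (zz \<omega>) :: real)"
      using fm by (rule int01) (auto simp: indicator_def)
    show "AE \<omega> in M. 0 \<le> (indicator A (xx \<omega>) * indicator C (zz \<omega>) :: real)" by simp
    show "integrable M (\<lambda>\<omega>. qZ A \<omega> * indicator C (zz \<omega>))"
      using qZ_props(1)[OF sA] ind_meas_z[OF C] by (rule int_bdd(2)) (auto simp: indicator_def)
    show "AE \<omega> in M. 0 \<le> qZ A \<omega> * indicator C (zz \<omega>)"
      using qZ_props(2)[OF sA] by eventually_elim simp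
  next
    fix S assume S: "S \<in> RX"
    have "(\<integral>\<omega>. (indicator A (xx \<omega>) * indicator S (yy \<omega>) * indicator C (zz \<omega>) :: real) \<partial>M)
       = (\<integral>\<omega>. (qZ A \<omega> * indicator S (yy \<omega>) * indicator C (zz \<omega>) :: real) \<partial>M)"
      by (rule ext_C[OF A S C])
    then show "(\<integral>\<omega>. indicator S (yy \<omega>) * (indicator A (xx \<omega>) * indicator C (zz \<omega>)) \<partial>M)
      = (\<integral>\<omega>. indicator S (yy \<omega>) * (qZ A \<omega> * indicator C (zz \<omega>)) \<partial>M)"
      by (simp add: ac_simps)
  qed
  then show ?thesis by (simp add: ac_simps)
qed

lemma ext_A:
  assumes A: "A \<in> sets VX" and B: "B \<in> sets VX" and C: "C \<in> sets VZ"
  shows "(\<integral>\<omega>. (indicator A (xx \<omega>) * indicator B (yy \<omega>) * indicator C (zz \<omega>) :: real) \<partial>M)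
       = (\<integral>\<omega>. (qZ A \<omega> * indicator B (yy \<omega>) * indicator C (zz \<omega>) :: real) \<partial>M)"
proof -
  define F where "F = vimage_algebra (space M) zz VZ"
  have Fs: "sigma_finite_subalgebra M F" unfolding F_def by (rule vim_sub[OF mzz])
  define k where "k = (\<lambda>\<omega>. indicator B (yy \<omega>) * indicator C (zz \<omega>) :: real)"
  have km: "k \<in> borel_measurable M" unfolding k_def
    using ind_meas_y[OF B] ind_meas_z[OF C] by (rule borel_measurable_times)
  have k01: "\<And>\<omega>. \<omega> \<in> space M \<Longrightarrow> 0 \<le> k \<omega> \<and> k \<omega> \<le> 1" by (auto simp: k_def indicator_def)
  define hk where "hk = real_cond_exp M F k"
  note ck = ce01[OF Fs km k01, folded hk_def]
  have sym: "(\<integral>\<omega>. qZ S \<omega> * k \<omega> \<partial>M) = (\<integral>\<omega>. indicator S (xx \<omega>) * hk \<omega> \<partial>M)" if S: "S \<in> sets VX" for S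
  proof -
    have m: "(\<lambda>\<omega>. of_bool (xx \<omega> \<in> S) :: real) \<in> borel_measurable M" using mxx S by measurable
    have "(\<integral>\<omega>. real_cond_exp M F (\<lambda>\<omega>. of_bool (xx \<omega> \<in> S)) \<omega> * k \<omega> \<partial>M)
        = (\<integral>\<omega>. of_bool (xx \<omega> \<in> S) * real_cond_exp M F k \<omega> \<partial>M)"
      by (rule ce_sym[OF Fs m _ km k01]) auto
    then show ?thesis unfolding qZ_def cond_prob_def gen_sigma_def F_def hk_def indicator_def .
  qed
  have "(\<integral>\<omega>. indicator A (xx \<omega>) * k \<omega> \<partial>M) = (\<integral>\<omega>. indicator A (xx \<omega>) * hk \<omega> \<partial>M)"
  proof (rule ext_gen[OF mxx vec_gen[OF finite_lessThan] _ _ _ _ _ A])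
    show "integrable M k" using km by (rule int01) (use k01 in auto)
    show "AE \<omega> in M. 0 \<le> k \<omega>" by (rule AE_I2) (use k01 in auto)
    show "integrable M hk" by (rule ck(3))
    have "AE \<omega> in M. 0 \<le> hk \<omega> \<and> hk \<omega> \<le> 1" unfolding hk_def by (rule ce01(1)[OF Fs km k01])
    then show "AE \<omega> in M. 0 \<le> hk \<omega>" by eventually_elim simp
  next
    fix S assume S: "S \<in> RX"
    then have sS: "S \<in> sets VX" by (auto intro!: sets_PiM_I_finite)
    have "(\<integral>\<omega>. indicator S (xx \<omega>) * k \<omega> \<partial>M) = (\<integral>\<omega>. qZ S \<omega> * k \<omega> \<partial>M)"
      using ext_B[OF S B C] unfolding k_def by (simp add: ac_simps)
    also have "\<dots> = (\<integral>\<omega>. indicator S (xx \<omega>) * hk \<omega> \<partial>M)" by (rule sym[OF sS])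
    finally show "(\<integral>\<omega>. indicator S (xx \<omega>) * k \<omega> \<partial>M) = (\<integral>\<omega>. indicator S (xx \<omega>) * hk \<omega> \<partial>M)" .
  qed
  also have "\<dots> = (\<integral>\<omega>. qZ A \<omega> * k \<omega> \<partial>M)" by (rule sym[OF A, symmetric])
  finally show ?thesis unfolding k_def by (simp add: ac_simps)
qed

end



lemma pair_gen:
  shows "sets (N1 \<Otimes>\<^sub>M N2) = sigma_sets (space (N1 \<Otimes>\<^sub>M N2)) {a \<times> b | a b. a \<in> sets N1 \<and> b \<in> sets N2}"
    "Int_stable {a \<times> b | a b. a \<in> sets N1 \<and> b \<in> sets N2}"
    "{a \<times> b | a b. a \<in> sets N1 \<and> b \<in> sets N2} \<subseteq> Pow (space (N1 \<Otimes>\<^sub>M N2))"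
    "space (N1 \<Otimes>\<^sub>M N2) \<in> {a \<times> b | a b. a \<in> sets N1 \<and> b \<in> sets N2}"
  using sets_pair_measure[of N1 N2] Int_stable_pair_measure_generator[of N1 N2]
    pair_measure_closed[of N1 N2]
  by (auto simp: space_pair_measure)

lemma gen_triv: "sets N = sigma_sets (space N) (sets N)" "Int_stable (sets N)" "sets N \<subseteq> Pow (space N)"
  "space N \<in> sets N"
  using sets.sets_into_space by (auto simp: sets.sigma_sets_eq Int_stable_def)

context prob_space begin

lemma ci_drop:
  fixes Y :: "'a \<Rightarrow> 'y"
  assumes V: "V \<in> measurable M N" and G: "G \<in> measurable M K" and u: "u \<in> measurable N K"
    and eq: "\<And>\<omega>. \<omega> \<in> space M \<Longrightarrow> G \<omega> = u (V \<omega>)"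
    and Y: "Y \<in> measurable M NY" and B: "B \<in> sets NY"
    and CI: "cond_indep M V N Y NY G K"
  shows "AE \<omega> in M. real_cond_exp M (vimage_algebra (space M) V N) (\<lambda>\<omega>. of_bool (Y \<omega> \<in> B)) \<omega>
       = real_cond_exp M (vimage_algebra (space M) G K) (\<lambda>\<omega>. of_bool (Y \<omega> \<in> B)) \<omega>"
proof -
  define FG where "FG = vimage_algebra (space M) G K"
  have FGs: "sigma_finite_subalgebra M FG" unfolding FG_def by (rule vim_sub[OF G])
  define eB where "eB = (\<lambda>\<omega>. of_bool (Y \<omega> \<in> B) :: real)"
  have eBm: "eB \<in> borel_measurable M" unfolding eB_def using Y B by measurable
  have eB01: "\<And>\<omega>. \<omega> \<in> space M \<Longrightarrow> 0 \<le> eB \<omega> \<and> eB \<omega> \<le> 1" by (simp add: eB_def)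
  define tg where "tg = real_cond_exp M FG eB"
  note ct = ce01[OF FGs eBm eB01, folded tg_def]
  have tgm: "tg \<in> borel_measurable FG" unfolding tg_def by (rule borel_measurable_cond_exp)
  have tgM: "tg \<in> borel_measurable M" unfolding tg_def by (rule borel_measurable_cond_exp2)
  have "AE \<omega> in M. real_cond_exp M (vimage_algebra (space M) V N) eB \<omega> = tg \<omega>"
  proof (rule charact_gen[OF V gen_triv])
    show "integrable M eB" using eBm by (rule int01) (simp add: eB_def)
    show "AE \<omega> in M. 0 \<le> eB \<omega>" by (simp add: eB_def)
    show "integrable M tg" by (rule ct(3))
    have "AE \<omega> in M. 0 \<le> tg \<omega> \<and> tg \<omega> \<le> 1" unfolding tg_def by (rule ce01(1)[OF FGs eBm eB01])
    then show "AE \<omega> in M. 0 \<le> tg \<omega>" by eventually_elim simp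
    show "tg \<in> borel_measurable (vimage_algebra (space M) V N)"
      using vim_mono[OF V G u eq tgm[unfolded FG_def]] .
  next
    fix C assume C: "C \<in> sets N"
    define eC where "eC = (\<lambda>\<omega>. of_bool (V \<omega> \<in> C) :: real)"
    have eCm: "eC \<in> borel_measurable M" unfolding eC_def using V C by measurable
    have eC01: "\<And>\<omega>. \<omega> \<in> space M \<Longrightarrow> 0 \<le> eC \<omega> \<and> eC \<omega> \<le> 1" by (simp add: eC_def)
    define eCB where "eCB = (\<lambda>\<omega>. of_bool (V \<omega> \<in> C \<and> Y \<omega> \<in> B) :: real)"
    have eCBm: "eCB \<in> borel_measurable M" unfolding eCB_def using V C Y B by measurable
    have eCB01: "\<And>\<omega>. \<omega> \<in> space M \<Longrightarrow> 0 \<le> eCB \<omega> \<and> eCB \<omega> \<le> 1" by (simp add: eCB_def)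
    have H: "AE \<omega> in M. real_cond_exp M FG eCB \<omega> = real_cond_exp M FG eC \<omega> * tg \<omega>"
    proof -
      have "AE \<omega> in M. cond_prob M G K (\<lambda>\<omega>. V \<omega> \<in> C \<and> Y \<omega> \<in> B) \<omega>
          = cond_prob M G K (\<lambda>\<omega>. V \<omega> \<in> C) \<omega> * cond_prob M G K (\<lambda>\<omega>. Y \<omega> \<in> B) \<omega>"
        using CI C B unfolding cond_indep_def by blast
      then show ?thesis unfolding cond_prob_def gen_sigma_def FG_def eCB_def eC_def tg_def eB_def .
    qed
    note cC = ce01[OF FGs eCm eC01] and cCB = ce01[OF FGs eCBm eCB01]
    have "(\<integral>\<omega>. indicator C (V \<omega>) * eB \<omega> \<partial>M) = (\<integral>\<omega>. eCB \<omega> \<partial>M)"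
      by (rule Bochner_Integration.integral_cong) (auto simp: eCB_def eB_def indicator_def)
    also have "\<dots> = (\<integral>\<omega>. real_cond_exp M FG eCB \<omega> \<partial>M)"
      by (rule sigma_finite_subalgebra.real_cond_exp_int(2)[OF FGs cCB(4), symmetric])
    also have "\<dots> = (\<integral>\<omega>. tg \<omega> * real_cond_exp M FG eC \<omega> \<partial>M)"
    proof (rule integral_cong_AE)
      show "(\<lambda>\<omega>. tg \<omega> * real_cond_exp M FG eC \<omega>) \<in> borel_measurable M"
        using tgM borel_measurable_cond_exp2 by (rule borel_measurable_times)
      show "AE \<omega> in M. real_cond_exp M FG eCB \<omega> = tg \<omega> * real_cond_exp M FG eC \<omega>"
        using H by eventually_elim (simp add: mult.commute)
    qed (rule borel_measurable_cond_exp2)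
    also have "\<dots> = (\<integral>\<omega>. tg \<omega> * eC \<omega> \<partial>M)"
    proof -
      have tgi: "integrable M tg" unfolding tg_def by (rule ce01(3)[OF FGs eBm eB01])
      have "integrable M (\<lambda>\<omega>. tg \<omega> * eC \<omega>)" by (rule int_bdd(2)[OF tgi eCm]) (auto simp: eC_def)
      then show ?thesis by (rule sigma_finite_subalgebra.real_cond_exp_intg(2)[OF FGs _ tgm eCm])
    qed
    also have "\<dots> = (\<integral>\<omega>. indicator C (V \<omega>) * tg \<omega> \<partial>M)"
      by (rule Bochner_Integration.integral_cong) (auto simp: eC_def indicator_def)
    finally show "(\<integral>\<omega>. indicator C (V \<omega>) * eB \<omega> \<partial>M) = (\<integral>\<omega>. indicator C (V \<omega>) * tg \<omega> \<partial>M)" .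
  qed
  then show ?thesis unfolding eB_def tg_def FG_def .
qed

end

context vsetup begin

definition "UU \<omega> = (yy \<omega>, zz \<omega>)"

lemma mUU: "UU \<in> measurable M (VX \<Otimes>\<^sub>M VZ)"
  unfolding UU_def using mxx myy mzz by measurable

lemma D1:
  assumes A: "A \<in> sets VX"
  shows "AE \<omega> in M. real_cond_exp M (vimage_algebra (space M) UU (VX \<Otimes>\<^sub>M VZ)) (\<lambda>\<omega>. of_bool (xx \<omega> \<in> A)) \<omega> = qZ A \<omega>"
proof (rule charact_gen[OF mUU pair_gen])
  have fm: "(\<lambda>\<omega>. of_bool (xx \<omega> \<in> A) :: real) \<in> borel_measurable M" using mxx A by measurable
  show "integrable M (\<lambda>\<omega>. of_bool (xx \<omega> \<in> A) :: real)" using fm by (rule int01) simp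
  show "AE \<omega> in M. 0 \<le> (of_bool (xx \<omega> \<in> A) :: real)" by simp
  show "integrable M (qZ A)" by (rule qZ_props(1)[OF A])
  show "AE \<omega> in M. 0 \<le> qZ A \<omega>" using qZ_props(2)[OF A] by eventually_elim simp
  show "qZ A \<in> borel_measurable (vimage_algebra (space M) UU (VX \<Otimes>\<^sub>M VZ))"
    by (rule vim_mono[OF mUU mzz measurable_snd _ qZ_meas(2)]) (simp add: UU_def)
next
  fix S assume "S \<in> {a \<times> b |a b. a \<in> sets VX \<and> b \<in> sets VZ}"
  then obtain a b where S: "S = a \<times> b" "a \<in> sets VX" "b \<in> sets VZ" by blast
  have "(\<integral>\<omega>. (indicator A (xx \<omega>) * indicator a (yy \<omega>) * indicator b (zz \<omega>) :: real) \<partial>M)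
      = (\<integral>\<omega>. (qZ A \<omega> * indicator a (yy \<omega>) * indicator b (zz \<omega>) :: real) \<partial>M)"
    by (rule ext_A[OF A S(2) S(3)])
  then show "(\<integral>\<omega>. indicator S (UU \<omega>) * of_bool (xx \<omega> \<in> A) \<partial>M) = (\<integral>\<omega>. indicator S (UU \<omega>) * qZ A \<omega> \<partial>M)"
    unfolding S(1) UU_def by (simp add: indicator_times ac_simps indicator_def[of A, symmetric])
qed

end



context prob_space begin

lemma intg01:
  fixes f e :: "'a \<Rightarrow> real"
  assumes Fs: "sigma_finite_subalgebra M F" and f: "f \<in> borel_measurable F" "AE \<omega> in M. \<bar>f \<omega>\<bar> \<le> 1"
    and e: "e \<in> borel_measurable M" "\<And>\<omega>. \<omega> \<in> space M \<Longrightarrow> 0 \<le> e \<omega> \<and> e \<omega> \<le> 1"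
  shows "(\<integral>\<omega>. f \<omega> * real_cond_exp M F e \<omega> \<partial>M) = (\<integral>\<omega>. f \<omega> * e \<omega> \<partial>M)"
proof -
  have fM: "f \<in> borel_measurable M"
    by (rule measurable_from_subalg[OF sigma_finite_subalgebra.subalg[OF Fs] f(1)])
  have "integrable M (\<lambda>\<omega>. f \<omega> * e \<omega>)"
  proof (rule integrable_const_bound[where B=1])
    show "AE \<omega> in M. norm (f \<omega> * e \<omega>) \<le> 1"
    proof -
      have "AE \<omega> in M. 0 \<le> e \<omega> \<and> e \<omega> \<le> 1" using e(2) by (rule AE_I2)
      then show ?thesis using f(2) by eventually_elim (auto simp: abs_mult intro: mult_le_one)
    qed
    show "(\<lambda>\<omega>. f \<omega> * e \<omega>) \<in> borel_measurable M" using fM e(1) by (rule borel_measurable_times)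
  qed
  then show ?thesis by (rule sigma_finite_subalgebra.real_cond_exp_intg(2)[OF Fs _ f(1) e(1)])
qed

end

locale vsetup2 = vsetup M n Yv Xv Zv MZ
  for M :: "'a measure" and n Yv Xv and Zv :: "nat \<Rightarrow> 'a \<Rightarrow> 'z" and MZ :: "'z measure" +
  fixes g :: "'z \<Rightarrow> 'g::topological_space" and h :: "'z \<Rightarrow> 'h::topological_space"
  assumes mg: "g \<in> borel_measurable MZ" and mh: "h \<in> borel_measurable MZ"
begin

abbreviation "VG \<equiv> PiM {..<n} (\<lambda>_. borel :: 'g measure)"
abbreviation "VH \<equiv> PiM {..<n} (\<lambda>_. borel :: 'h measure)"
definition "gz \<omega> = vmap n g (zz \<omega>)"
definition "hz \<omega> = vmap n h (zz \<omega>)"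
definition "GH \<omega> = (gz \<omega>, hz \<omega>)"
definition "qGH A = cond_prob M GH (VG \<Otimes>\<^sub>M VH) (\<lambda>\<omega>. xx \<omega> \<in> A)"
definition "U2 \<omega> = (yy \<omega>, GH \<omega>)"

lemma mvg: "(\<lambda>v. vmap n g v) \<in> VZ \<rightarrow>\<^sub>M VG"
  unfolding vmap_def by (rule measurable_restrict) (use mg in measurable)
lemma mvh: "(\<lambda>v. vmap n h v) \<in> VZ \<rightarrow>\<^sub>M VH"
  unfolding vmap_def by (rule measurable_restrict) (use mh in measurable)
lemma mvgh: "(\<lambda>v. (vmap n g v, vmap n h v)) \<in> VZ \<rightarrow>\<^sub>M VG \<Otimes>\<^sub>M VH"
  using mvg mvh by measurable
lemma mgz: "gz \<in> M \<rightarrow>\<^sub>M VG" unfolding gz_def using measurable_compose[OF mzz mvg] by simp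
lemma mhz: "hz \<in> M \<rightarrow>\<^sub>M VH" unfolding hz_def using measurable_compose[OF mzz mvh] by simp
lemma mGH: "GH \<in> M \<rightarrow>\<^sub>M VG \<Otimes>\<^sub>M VH" unfolding GH_def using mgz mhz by measurable
lemma mU2: "U2 \<in> M \<rightarrow>\<^sub>M VX \<Otimes>\<^sub>M (VG \<Otimes>\<^sub>M VH)" unfolding U2_def using myy mGH by measurable

lemma GH_sub: "f \<in> borel_measurable (vimage_algebra (space M) GH (VG \<Otimes>\<^sub>M VH)) \<Longrightarrow>
    f \<in> borel_measurable (vimage_algebra (space M) zz VZ)"
  by (rule vim_mono[OF mzz mGH mvgh]) (simp add: GH_def gz_def hz_def)
lemma gz_sub_zz: "f \<in> borel_measurable (vimage_algebra (space M) gz VG) \<Longrightarrow>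
    f \<in> borel_measurable (vimage_algebra (space M) zz VZ)"
  by (rule vim_mono[OF mzz mgz mvg]) (simp add: gz_def)
lemma gz_sub_GH: "f \<in> borel_measurable (vimage_algebra (space M) gz VG) \<Longrightarrow>
    f \<in> borel_measurable (vimage_algebra (space M) GH (VG \<Otimes>\<^sub>M VH))"
  by (rule vim_mono[OF mGH mgz measurable_fst]) (simp add: GH_def)

lemma qGH_props:
  assumes A: "A \<in> sets VX"
  shows "integrable M (qGH A)" "AE \<omega> in M. 0 \<le> qGH A \<omega> \<and> qGH A \<omega> \<le> 1" "AE \<omega> in M. \<bar>qGH A \<omega>\<bar> \<le> 1"
    "qGH A \<in> borel_measurable (vimage_algebra (space M) GH (VG \<Otimes>\<^sub>M VH))"
proof -
  have Fs: "sigma_finite_subalgebra M (vimage_algebra (space M) GH (VG \<Otimes>\<^sub>M VH))" by (rule vim_sub[OF mGH])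
  have m: "(\<lambda>\<omega>. of_bool (xx \<omega> \<in> A) :: real) \<in> borel_measurable M" using mxx A by measurable
  note c = ce01[OF Fs m]
  show "integrable M (qGH A)" "AE \<omega> in M. 0 \<le> qGH A \<omega> \<and> qGH A \<omega> \<le> 1" "AE \<omega> in M. \<bar>qGH A \<omega>\<bar> \<le> 1"
    using c unfolding qGH_def cond_prob_def gen_sigma_def by auto
  show "qGH A \<in> borel_measurable (vimage_algebra (space M) GH (VG \<Otimes>\<^sub>M VH))"
    unfolding qGH_def cond_prob_def gen_sigma_def by (rule borel_measurable_cond_exp)
qed

end



context prob_space begin
lemma subM: "V \<in> measurable M N \<Longrightarrow> f \<in> borel_measurable (vimage_algebra (space M) V N) \<Longrightarrow> f \<in> borel_measurable M"
  by (rule measurable_from_subalg[OF vim_subalg])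
end

context vsetup2 begin

lemma D2:
  assumes A: "A \<in> sets VX" and CIy: "cond_indep M zz VZ yy VX gz VG"
  shows "AE \<omega> in M. real_cond_exp M (vimage_algebra (space M) U2 (VX \<Otimes>\<^sub>M (VG \<Otimes>\<^sub>M VH))) (\<lambda>\<omega>. of_bool (xx \<omega> \<in> A)) \<omega> = qGH A \<omega>"
proof (rule charact_gen[OF mU2 pair_gen])
  have fm: "(\<lambda>\<omega>. of_bool (xx \<omega> \<in> A) :: real) \<in> borel_measurable M" using mxx A by measurable
  show "integrable M (\<lambda>\<omega>. of_bool (xx \<omega> \<in> A) :: real)" using fm by (rule int01) simp
  show "AE \<omega> in M. 0 \<le> (of_bool (xx \<omega> \<in> A) :: real)" by simp
  show "integrable M (qGH A)" by (rule qGH_props(1)[OF A])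
  show "AE \<omega> in M. 0 \<le> qGH A \<omega>" using qGH_props(2)[OF A] by eventually_elim simp
  show "qGH A \<in> borel_measurable (vimage_algebra (space M) U2 (VX \<Otimes>\<^sub>M (VG \<Otimes>\<^sub>M VH)))"
    by (rule vim_mono[OF mU2 mGH measurable_snd _ qGH_props(4)[OF A]]) (simp add: U2_def)
next
  fix S assume "S \<in> {a \<times> b |a b. a \<in> sets VX \<and> b \<in> sets (VG \<Otimes>\<^sub>M VH)}"
  then obtain B R where S: "S = B \<times> R" and B: "B \<in> sets VX" and R: "R \<in> sets (VG \<Otimes>\<^sub>M VH)" by blast
  define Fz where "Fz = vimage_algebra (space M) zz VZ"
  define Fgh where "Fgh = vimage_algebra (space M) GH (VG \<Otimes>\<^sub>M VH)"
  define Fg where "Fg = vimage_algebra (space M) gz VG"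
  have Fzs: "sigma_finite_subalgebra M Fz" unfolding Fz_def by (rule vim_sub[OF mzz])
  have Fghs: "sigma_finite_subalgebra M Fgh" unfolding Fgh_def by (rule vim_sub[OF mGH])
  have Fgs: "sigma_finite_subalgebra M Fg" unfolding Fg_def by (rule vim_sub[OF mgz])
  define eA where "eA = (\<lambda>\<omega>. of_bool (xx \<omega> \<in> A) :: real)"
  define eB where "eB = (\<lambda>\<omega>. of_bool (yy \<omega> \<in> B) :: real)"
  have eAm: "eA \<in> borel_measurable M" unfolding eA_def using mxx A by measurable
  have eBm: "eB \<in> borel_measurable M" unfolding eB_def using myy B by measurable
  have eA01: "\<And>\<omega>. \<omega> \<in> space M \<Longrightarrow> 0 \<le> eA \<omega> \<and> eA \<omega> \<le> 1" by (simp add: eA_def)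
  have eB01: "\<And>\<omega>. \<omega> \<in> space M \<Longrightarrow> 0 \<le> eB \<omega> \<and> eB \<omega> \<le> 1" by (simp add: eB_def)
  define k where "k = (\<lambda>\<omega>. indicator R (GH \<omega>) :: real)"
  have kgh: "k \<in> borel_measurable Fgh" unfolding k_def Fgh_def by (rule vim_comp[OF mGH]) (use R in simp)
  have kz: "k \<in> borel_measurable Fz" unfolding Fz_def by (rule GH_sub[OF kgh[unfolded Fgh_def]])
  have kM: "k \<in> borel_measurable M" using kz unfolding Fz_def by (rule subM[OF mzz])
  have kb: "AE \<omega> in M. \<bar>k \<omega>\<bar> \<le> 1" by (rule AE_I2) (simp add: k_def indicator_def)
  define tZ where "tZ = real_cond_exp M Fz eB"
  define tg where "tg = real_cond_exp M Fg eB"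
  have CI: "AE \<omega> in M. tZ \<omega> = tg \<omega>"
    unfolding tZ_def tg_def Fz_def Fg_def eB_def
    by (rule ci_drop[OF mzz mgz mvg _ myy B CIy]) (simp add: gz_def)
  have tgg: "tg \<in> borel_measurable Fg" unfolding tg_def by (rule borel_measurable_cond_exp)
  have tgz: "tg \<in> borel_measurable Fz" using gz_sub_zz[OF tgg[unfolded Fg_def]] unfolding Fz_def .
  have tggh: "tg \<in> borel_measurable Fgh" using gz_sub_GH[OF tgg[unfolded Fg_def]] unfolding Fgh_def .
  have tgM: "tg \<in> borel_measurable M" unfolding tg_def by (rule borel_measurable_cond_exp2)
  have tZM: "tZ \<in> borel_measurable M" unfolding tZ_def by (rule borel_measurable_cond_exp2)
  have tgb: "AE \<omega> in M. \<bar>tg \<omega>\<bar> \<le> 1" unfolding tg_def by (rule ce01(2)[OF Fgs eBm eB01])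
  have qZz: "qZ A \<in> borel_measurable Fz" unfolding Fz_def by (rule qZ_meas(2))
  have qZM: "qZ A \<in> borel_measurable M" by (rule qZ_meas(1))
  have qZb: "AE \<omega> in M. \<bar>qZ A \<omega>\<bar> \<le> 1" by (rule qZ_props(3)[OF A])
  have qZe: "qZ A = real_cond_exp M Fz eA" unfolding qZ_def cond_prob_def gen_sigma_def Fz_def eA_def ..
  have qGgh: "qGH A \<in> borel_measurable Fgh" unfolding Fgh_def by (rule qGH_props(4)[OF A])
  have qGz: "qGH A \<in> borel_measurable Fz" unfolding Fz_def by (rule GH_sub[OF qGgh[unfolded Fgh_def]])
  have qGM: "qGH A \<in> borel_measurable M" using qGz unfolding Fz_def by (rule subM[OF mzz])
  have qGb: "AE \<omega> in M. \<bar>qGH A \<omega>\<bar> \<le> 1" by (rule qGH_props(3)[OF A])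
  have qGe: "qGH A = real_cond_exp M Fgh eA" unfolding qGH_def cond_prob_def gen_sigma_def Fgh_def eA_def ..
  define R' where "R' = (\<lambda>v. (vmap n g v, vmap n h v)) -` R \<inter> space VZ"
  have R': "R' \<in> sets VZ" unfolding R'_def by (rule measurable_sets[OF mvgh R])
  have kR: "k \<omega> = indicator R' (zz \<omega>)" if "\<omega> \<in> space M" for \<omega>
    using measurable_space[OF mzz that] by (simp add: k_def R'_def GH_def gz_def hz_def indicator_def)
  have bprod: "AE \<omega> in M. \<bar>a \<omega> * b \<omega>\<bar> \<le> 1" if "AE \<omega> in M. \<bar>a \<omega>\<bar> \<le> 1" "AE \<omega> in M. \<bar>b \<omega>\<bar> \<le> (1::real)" for a b
    using that by eventually_elim (auto simp: abs_mult intro: mult_le_one)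
  have "(\<integral>\<omega>. indicator S (U2 \<omega>) * of_bool (xx \<omega> \<in> A) \<partial>M)
      = (\<integral>\<omega>. (indicator A (xx \<omega>) * indicator B (yy \<omega>) * indicator R' (zz \<omega>) :: real) \<partial>M)"
  proof (rule Bochner_Integration.integral_cong[OF refl])
    fix \<omega> assume \<omega>: "\<omega> \<in> space M"
    have memR: "(GH \<omega> \<in> R) = (zz \<omega> \<in> R')"
      using measurable_space[OF mzz \<omega>] by (simp add: R'_def GH_def gz_def hz_def)
    show "indicator S (U2 \<omega>) * of_bool (xx \<omega> \<in> A) = (indicator A (xx \<omega>) * indicator B (yy \<omega>) * indicator R' (zz \<omega>) :: real)"
      by (simp add: S U2_def indicator_times indicator_def memR)
  qed
  also have "\<dots> = (\<integral>\<omega>. (qZ A \<omega> * indicator B (yy \<omega>) * indicator R' (zz \<omega>) :: real) \<partial>M)"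
    by (rule ext_A[OF A B R'])
  also have "\<dots> = (\<integral>\<omega>. (qZ A \<omega> * k \<omega>) * eB \<omega> \<partial>M)"
    by (rule Bochner_Integration.integral_cong[OF refl]) (simp add: kR eB_def indicator_def)
  also have "\<dots> = (\<integral>\<omega>. (qZ A \<omega> * k \<omega>) * tZ \<omega> \<partial>M)" unfolding tZ_def
    by (rule intg01[OF Fzs _ _ eBm eB01, symmetric])
       (rule borel_measurable_times[OF qZz kz], rule bprod[OF qZb kb])
  also have "\<dots> = (\<integral>\<omega>. (qZ A \<omega> * k \<omega>) * tg \<omega> \<partial>M)"
  proof (rule integral_cong_AE)
    show "(\<lambda>\<omega>. qZ A \<omega> * k \<omega> * tZ \<omega>) \<in> borel_measurable M" using qZM kM tZM by measurable
    show "(\<lambda>\<omega>. qZ A \<omega> * k \<omega> * tg \<omega>) \<in> borel_measurable M" using qZM kM tgM by measurable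
    show "AE \<omega> in M. qZ A \<omega> * k \<omega> * tZ \<omega> = qZ A \<omega> * k \<omega> * tg \<omega>" using CI by eventually_elim simp
  qed
  also have "\<dots> = (\<integral>\<omega>. (k \<omega> * tg \<omega>) * qZ A \<omega> \<partial>M)" by (simp add: ac_simps)
  also have "\<dots> = (\<integral>\<omega>. (k \<omega> * tg \<omega>) * eA \<omega> \<partial>M)" unfolding qZe
    by (rule intg01[OF Fzs _ _ eAm eA01])
       (rule borel_measurable_times[OF kz tgz], rule bprod[OF kb tgb])
  also have "\<dots> = (\<integral>\<omega>. (k \<omega> * tg \<omega>) * qGH A \<omega> \<partial>M)" unfolding qGe
    by (rule intg01[OF Fghs _ _ eAm eA01, symmetric])
       (rule borel_measurable_times[OF kgh tggh], rule bprod[OF kb tgb])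
  also have "\<dots> = (\<integral>\<omega>. (k \<omega> * qGH A \<omega>) * tg \<omega> \<partial>M)" by (simp add: ac_simps)
  also have "\<dots> = (\<integral>\<omega>. (k \<omega> * qGH A \<omega>) * tZ \<omega> \<partial>M)"
  proof (rule integral_cong_AE)
    show "(\<lambda>\<omega>. k \<omega> * qGH A \<omega> * tZ \<omega>) \<in> borel_measurable M" using qGM kM tZM by measurable
    show "(\<lambda>\<omega>. k \<omega> * qGH A \<omega> * tg \<omega>) \<in> borel_measurable M" using qGM kM tgM by measurable
    show "AE \<omega> in M. k \<omega> * qGH A \<omega> * tg \<omega> = k \<omega> * qGH A \<omega> * tZ \<omega>" using CI by eventually_elim simp
  qed
  also have "\<dots> = (\<integral>\<omega>. (k \<omega> * qGH A \<omega>) * eB \<omega> \<partial>M)" unfolding tZ_def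
    by (rule intg01[OF Fzs _ _ eBm eB01])
       (rule borel_measurable_times[OF kz qGz], rule bprod[OF kb qGb])
  also have "\<dots> = (\<integral>\<omega>. indicator S (U2 \<omega>) * qGH A \<omega> \<partial>M)"
    by (rule Bochner_Integration.integral_cong[OF refl])
       (auto simp: S U2_def k_def eB_def indicator_times indicator_def)
  finally show "(\<integral>\<omega>. indicator S (U2 \<omega>) * of_bool (xx \<omega> \<in> A) \<partial>M) = (\<integral>\<omega>. indicator S (U2 \<omega>) * qGH A \<omega> \<partial>M)" .
qed

end



lemma count_bound:
  fixes v :: "nat \<Rightarrow> real" and c :: real
  assumes K: "finite K" and c: "0 \<le> c"
  shows "real (card {j\<in>K. real (card {k\<in>K. v j \<le> v k}) \<le> c}) \<le> c"
proof (cases "{j\<in>K. real (card {k\<in>K. v j \<le> v k}) \<le> c} = {}")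
  case True show ?thesis unfolding True using c by simp
next
  case False
  define J where "J = {j\<in>K. real (card {k\<in>K. v j \<le> v k}) \<le> c}"
  have fJ: "finite J" using K unfolding J_def by simp
  have ne: "J \<noteq> {}" using False unfolding J_def .
  have "Min (v ` J) \<in> v ` J" using fJ ne by (intro Min_in) auto
  then obtain j where jJ: "j \<in> J" and jm: "v j = Min (v ` J)" by auto
  have j: "j \<in> J" "\<And>j'. j' \<in> J \<Longrightarrow> v j \<le> v j'"
    using jJ jm fJ by (auto intro: Min_le)
  have "J \<subseteq> {k\<in>K. v j \<le> v k}" using j(2) unfolding J_def by auto
  then have "card J \<le> card {k\<in>K. v j \<le> v k}" using K by (intro card_mono) auto
  also have "real \<dots> \<le> c" using j(1) unfolding J_def by auto
  finally show ?thesis unfolding J_def by simp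
qed

context prob_space begin

lemma emeas_dens2:
  fixes h :: "'a \<Rightarrow> real"
  assumes V: "V \<in> measurable M N" and h: "integrable M h" "AE \<omega> in M. 0 \<le> h \<omega>" and S: "S \<in> sets N"
  shows "emeasure (distr (density M (\<lambda>\<omega>. ennreal (h \<omega>))) N V) S
       = ennreal (\<integral>\<omega>. indicator S (V \<omega>) * h \<omega> \<partial>M)"
  by (rule emeas_dens[OF V h S])

lemma ext_gen2:
  fixes f g :: "'a \<Rightarrow> real"
  assumes V1: "V1 \<in> measurable M N" and V2: "V2 \<in> measurable M N"
    and gen: "sets N = sigma_sets (space N) E" "Int_stable E" "E \<subseteq> Pow (space N)" "space N \<in> E"
    and f: "integrable M f" "AE \<omega> in M. 0 \<le> f \<omega>"
    and g: "integrable M g" "AE \<omega> in M. 0 \<le> g \<omega>"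
    and eq: "\<And>S. S \<in> E \<Longrightarrow> (\<integral>\<omega>. indicator S (V1 \<omega>) * f \<omega> \<partial>M) = (\<integral>\<omega>. indicator S (V2 \<omega>) * g \<omega> \<partial>M)"
    and S: "S \<in> sets N"
  shows "(\<integral>\<omega>. indicator S (V1 \<omega>) * f \<omega> \<partial>M) = (\<integral>\<omega>. indicator S (V2 \<omega>) * g \<omega> \<partial>M)"
proof -
  let ?mf = "distr (density M (\<lambda>\<omega>. ennreal (f \<omega>))) N V1"
  let ?mg = "distr (density M (\<lambda>\<omega>. ennreal (g \<omega>))) N V2"
  have "?mf = ?mg"
  proof (rule measure_eqI_generator_eq[OF gen(2) gen(3), of _ _ "\<lambda>_. space N"])
    fix X assume X: "X \<in> E"
    then have "X \<in> sets N" using gen(1) by auto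
    then show "emeasure ?mf X = emeasure ?mg X"
      using emeas_dens[OF V1 f] emeas_dens[OF V2 g] eq[OF X] by simp
  next
    show "sets ?mf = sigma_sets (space N) E" "sets ?mg = sigma_sets (space N) E" using gen(1) by auto
    show "range (\<lambda>_. space N) \<subseteq> E" using gen(4) by auto
    show "(\<Union>i::nat. space N) = space N" by simp
    show "emeasure ?mf (space N) \<noteq> \<infinity>" using emeas_dens[OF V1 f, of "space N"] by simp
  qed
  then have "ennreal (\<integral>\<omega>. indicator S (V1 \<omega>) * f \<omega> \<partial>M) = ennreal (\<integral>\<omega>. indicator S (V2 \<omega>) * g \<omega> \<partial>M)"
    using emeas_dens[OF V1 f S] emeas_dens[OF V2 g S] by simp
  moreover have "AE \<omega> in M. 0 \<le> indicator S (V1 \<omega>) * f \<omega>" using f(2) by eventually_elim auto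
  then have "0 \<le> (\<integral>\<omega>. indicator S (V1 \<omega>) * f \<omega> \<partial>M)" by (rule integral_nonneg_AE)
  moreover have "AE \<omega> in M. 0 \<le> indicator S (V2 \<omega>) * g \<omega>" using g(2) by eventually_elim auto
  then have "0 \<le> (\<integral>\<omega>. indicator S (V2 \<omega>) * g \<omega> \<partial>M)" by (rule integral_nonneg_AE)
  ultimately show ?thesis by simp
qed

lemma law_swap:
  fixes W :: "'a \<Rightarrow> 'w" and XX :: "'a \<Rightarrow> 'k \<Rightarrow> 'x" and mq :: "'x set \<Rightarrow> 'a \<Rightarrow> real"
  assumes K: "finite K" and Wm: "W \<in> measurable M NW" and XXm: "XX \<in> measurable M (PiM K (\<lambda>_. VX))"
    and R: "\<And>C A. C \<in> sets NW \<Longrightarrow> (\<And>k. k \<in> K \<Longrightarrow> A k \<in> sets VX) \<Longrightarrow>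
       (\<integral>\<omega>. indicator C (W \<omega>) * indicator (PiE K A) (XX \<omega>) \<partial>M)
     = (\<integral>\<omega>. indicator C (W \<omega>) * (\<Prod>k\<in>K. mq (A k) \<omega>) \<partial>M)"
    and \<pi>: "bij_betw \<pi> K K"
    and T: "T \<in> sets (NW \<Otimes>\<^sub>M PiM K (\<lambda>_. VX))"
  shows "prob {\<omega>\<in>space M. (W \<omega>, XX \<omega>) \<in> T} = prob {\<omega>\<in>space M. (W \<omega>, \<lambda>k\<in>K. XX \<omega> (\<pi> k)) \<in> T}"
proof -
  define XP where "XP \<omega> = (\<lambda>k\<in>K. XX \<omega> (\<pi> k))" for \<omega>
  have \<pi>K: "\<And>k. k \<in> K \<Longrightarrow> \<pi> k \<in> K" using \<pi> by (auto simp: bij_betw_def)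
  have XPm: "XP \<in> measurable M (PiM K (\<lambda>_. VX))" unfolding XP_def
  proof (rule measurable_restrict)
    fix k assume "k \<in> K"
    then show "(\<lambda>\<omega>. XX \<omega> (\<pi> k)) \<in> measurable M VX"
      using measurable_component_singleton[OF \<pi>K[OF \<open>k\<in>K\<close>], of "\<lambda>_. VX"] XXm
      by (rule_tac measurable_compose[OF XXm]) auto
  qed
  have XXe: "XX \<omega> = (\<lambda>k\<in>K. XX \<omega> k)" if "\<omega> \<in> space M" for \<omega>
    using measurable_space[OF XXm that] by (auto simp: space_PiM PiE_def extensional_def restrict_def)
  define \<sigma> where "\<sigma> = inv_into K \<pi>"
  have \<sigma>: "bij_betw \<sigma> K K" unfolding \<sigma>_def using \<pi> by (rule bij_betw_inv_into)
  have \<pi>\<sigma>: "\<And>k. k \<in> K \<Longrightarrow> \<pi> (\<sigma> k) = k" unfolding \<sigma>_def using \<pi> by (simp add: bij_betw_inv_into_right)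
  have stage1: "(\<integral>\<omega>. (indicator S (XX \<omega>) * indicator C (W \<omega>) :: real) \<partial>M) = (\<integral>\<omega>. (indicator S (XP \<omega>) * indicator C (W \<omega>) :: real) \<partial>M)"
    if C: "C \<in> sets NW" and S: "S \<in> sets (PiM K (\<lambda>_. VX))" for C S
  proof (rule ext_gen2[OF XXm XPm vec_gen[OF K] _ _ _ _ _ S])
    have cm: "(\<lambda>\<omega>. indicator C (W \<omega>) :: real) \<in> borel_measurable M" using Wm C by measurable
    show "integrable M (\<lambda>\<omega>. indicator C (W \<omega>) :: real)" using cm by (rule int01) (simp add: indicator_def)
    show "AE \<omega> in M. 0 \<le> (indicator C (W \<omega>) :: real)" by simp
    show "integrable M (\<lambda>\<omega>. indicator C (W \<omega>) :: real)" using cm by (rule int01) (simp add: indicator_def)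
    show "AE \<omega> in M. 0 \<le> (indicator C (W \<omega>) :: real)" by simp
  next
    fix S' assume "S' \<in> {PiE K A | A. \<forall>i\<in>K. A i \<in> sets VX}"
    then obtain A where S': "S' = PiE K A" and A: "\<And>k. k \<in> K \<Longrightarrow> A k \<in> sets VX" by blast
    have A': "\<And>k. k \<in> K \<Longrightarrow> A (\<sigma> k) \<in> sets VX" using A \<sigma> by (auto simp: bij_betw_def)
    have "(\<integral>\<omega>. (indicator S' (XX \<omega>) * indicator C (W \<omega>) :: real) \<partial>M) = (\<integral>\<omega>. indicator C (W \<omega>) * (\<Prod>k\<in>K. mq (A k) \<omega>) \<partial>M)"
      using R[OF C A] by (simp add: S' mult.commute)
    also have "\<dots> = (\<integral>\<omega>. indicator C (W \<omega>) * (\<Prod>k\<in>K. mq (A (\<sigma> k)) \<omega>) \<partial>M)"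
      using prod.reindex_bij_betw[OF \<sigma>, of "\<lambda>k. mq (A k) _"] by simp
    also have "\<dots> = (\<integral>\<omega>. indicator C (W \<omega>) * indicator (PiE K (\<lambda>k. A (\<sigma> k))) (XX \<omega>) \<partial>M)"
      using R[OF C A'] by simp
    also have "\<dots> = (\<integral>\<omega>. (indicator S' (XP \<omega>) * indicator C (W \<omega>) :: real) \<partial>M)"
    proof (rule Bochner_Integration.integral_cong[OF refl])
      fix \<omega> assume \<omega>: "\<omega> \<in> space M"
      have "indicator (PiE K (\<lambda>k. A (\<sigma> k))) (XX \<omega>) = (\<Prod>k\<in>K. indicator (A (\<sigma> k)) (XX \<omega> k) :: real)"
        by (subst XXe[OF \<omega>], rule ind_PiE_restrict[OF K])
      also have "\<dots> = (\<Prod>k\<in>K. indicator (A (\<sigma> (\<pi> k))) (XX \<omega> (\<pi> k)))"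
        using prod.reindex_bij_betw[OF \<pi>, of "\<lambda>k. indicator (A (\<sigma> k)) (XX \<omega> k) :: real"] by simp
      also have "\<dots> = (\<Prod>k\<in>K. indicator (A k) (XX \<omega> (\<pi> k)))"
        unfolding \<sigma>_def using \<pi> by (intro prod.cong refl) (simp add: bij_betw_inv_into_left)
      also have "\<dots> = indicator S' (XP \<omega>)"
        unfolding S' XP_def by (rule ind_PiE_restrict[OF K, symmetric])
      finally show "indicator C (W \<omega>) * indicator (PiE K (\<lambda>k. A (\<sigma> k))) (XX \<omega>) = indicator S' (XP \<omega>) * (indicator C (W \<omega>) :: real)"
        by simp
    qed
    finally show "(\<integral>\<omega>. (indicator S' (XX \<omega>) * indicator C (W \<omega>) :: real) \<partial>M) = (\<integral>\<omega>. (indicator S' (XP \<omega>) * indicator C (W \<omega>) :: real) \<partial>M)" .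
  qed
  have Phi1: "(\<lambda>\<omega>. (W \<omega>, XX \<omega>)) \<in> measurable M (NW \<Otimes>\<^sub>M PiM K (\<lambda>_. VX))" using Wm XXm by measurable
  have Phi2: "(\<lambda>\<omega>. (W \<omega>, XP \<omega>)) \<in> measurable M (NW \<Otimes>\<^sub>M PiM K (\<lambda>_. VX))" using Wm XPm by measurable
  have "(\<integral>\<omega>. (indicator T (W \<omega>, XX \<omega>) * 1 :: real) \<partial>M) = (\<integral>\<omega>. (indicator T (W \<omega>, XP \<omega>) * 1 :: real) \<partial>M)"
  proof (rule ext_gen2[OF Phi1 Phi2 pair_gen _ _ _ _ _ T])
    fix S assume "S \<in> {a \<times> b |a b. a \<in> sets NW \<and> b \<in> sets (PiM K (\<lambda>_. VX))}"
    then obtain C B where S: "S = C \<times> B" "C \<in> sets NW" "B \<in> sets (PiM K (\<lambda>_. VX))" by blast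
    show "(\<integral>\<omega>. (indicator S (W \<omega>, XX \<omega>) * 1 :: real) \<partial>M) = (\<integral>\<omega>. (indicator S (W \<omega>, XP \<omega>) * 1 :: real) \<partial>M)"
      using stage1[OF S(2) S(3)] by (simp add: S(1) indicator_times mult.commute)
  qed auto
  moreover have "(\<integral>\<omega>. (indicator T (W \<omega>, XX \<omega>) * 1 :: real) \<partial>M) = prob {\<omega>\<in>space M. (W \<omega>, XX \<omega>) \<in> T}"
  proof -
    have "(\<integral>\<omega>. (indicator T (W \<omega>, XX \<omega>) * 1 :: real) \<partial>M) = (\<integral>\<omega>. indicator {\<omega>\<in>space M. (W \<omega>, XX \<omega>) \<in> T} \<omega> \<partial>M)"
      by (rule Bochner_Integration.integral_cong) (auto simp: indicator_def)
    also have "\<dots> = prob {\<omega>\<in>space M. (W \<omega>, XX \<omega>) \<in> T}" by (simp add: Int_absorb2 subset_iff)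
    finally show ?thesis .
  qed
  moreover have "(\<integral>\<omega>. (indicator T (W \<omega>, XP \<omega>) * 1 :: real) \<partial>M) = prob {\<omega>\<in>space M. (W \<omega>, XP \<omega>) \<in> T}"
  proof -
    have "(\<integral>\<omega>. (indicator T (W \<omega>, XP \<omega>) * 1 :: real) \<partial>M) = (\<integral>\<omega>. indicator {\<omega>\<in>space M. (W \<omega>, XP \<omega>) \<in> T} \<omega> \<partial>M)"
      by (rule Bochner_Integration.integral_cong) (auto simp: indicator_def)
    also have "\<dots> = prob {\<omega>\<in>space M. (W \<omega>, XP \<omega>) \<in> T}" by (simp add: Int_absorb2 subset_iff)
    finally show ?thesis .
  qed
  ultimately show ?thesis unfolding XP_def by simp
qed

end



lemma prod_ind:
  assumes "finite I"
  shows "(\<Prod>i\<in>I. indicator (A i) (F i) :: real) = of_bool (\<forall>i\<in>I. F i \<in> A i)"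
proof (cases "\<forall>i\<in>I. F i \<in> A i")
  case True
  then have "(\<Prod>i\<in>I. indicator (A i) (F i) :: real) = (\<Prod>i\<in>I. 1)" by (intro prod.cong) auto
  then show ?thesis using True by simp
next
  case False
  then obtain j where j: "j \<in> I" "F j \<notin> A j" by blast
  then have "(\<Prod>i\<in>I. indicator (A i) (F i) :: real) = 0"
    using assms j by (intro prod_zero) (auto intro!: bexI[of _ j])
  then show ?thesis using j by auto
qed

lemma abs_prod_le1:
  fixes f :: "'i \<Rightarrow> real"
  assumes "\<And>i. i \<in> I \<Longrightarrow> \<bar>f i\<bar> \<le> 1"
  shows "\<bar>\<Prod>i\<in>I. f i\<bar> \<le> 1"
  unfolding abs_prod by (rule prod_le_1) (use assms in auto)

context prob_space begin

lemma fin_rect: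
  fixes W :: "'a \<Rightarrow> 'w" and xx :: "'a \<Rightarrow> 'x" and xt :: "nat \<Rightarrow> 'a \<Rightarrow> 'x" and mq :: "'x set \<Rightarrow> 'a \<Rightarrow> real"
  assumes Gs: "sigma_finite_subalgebra M G"
    and WG: "W \<in> measurable G NW"
    and Dm: "D \<in> measurable M ND"
    and WD: "W \<in> measurable (vimage_algebra (space M) D ND) NW"
    and xD: "xx \<in> measurable (vimage_algebra (space M) D ND) VX"
    and xtm: "\<And>m. m \<in> {1..Mc} \<Longrightarrow> xt m \<in> measurable M VX"
    and samp: "\<And>A. (\<And>m. m \<in> {1..Mc} \<Longrightarrow> A m \<in> sets VX) \<Longrightarrow>
        AE \<omega> in M. cond_prob M D ND (\<lambda>\<omega>'. \<forall>m\<in>{1..Mc}. xt m \<omega>' \<in> A m) \<omega> = (\<Prod>m\<in>{1..Mc}. mq (A m) \<omega>)"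
    and mqm: "\<And>A. A \<in> sets VX \<Longrightarrow> mq A \<in> borel_measurable M"
    and mq01: "\<And>A \<omega>. A \<in> sets VX \<Longrightarrow> \<omega> \<in> space M \<Longrightarrow> 0 \<le> mq A \<omega> \<and> mq A \<omega> \<le> 1"
    and mqG: "\<And>A. A \<in> sets VX \<Longrightarrow> AE \<omega> in M. mq A \<omega> = real_cond_exp M G (\<lambda>\<omega>. of_bool (xx \<omega> \<in> A)) \<omega>"
    and C: "C \<in> sets NW" and A: "\<And>k. k \<in> {0..Mc} \<Longrightarrow> A k \<in> sets VX"
  shows "(\<integral>\<omega>. indicator C (W \<omega>) * indicator (PiE {0..Mc} A) (\<lambda>k\<in>{0..Mc}. if k = 0 then xx \<omega> else xt k \<omega>) \<partial>M)
       = (\<integral>\<omega>. indicator C (W \<omega>) * (\<Prod>k\<in>{0..Mc}. mq (A k) \<omega>) \<partial>M)"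
proof -
  define Fd where "Fd = vimage_algebra (space M) D ND"
  have Fds: "sigma_finite_subalgebra M Fd" unfolding Fd_def by (rule vim_sub[OF Dm])
  have xM: "xx \<in> measurable M VX" using xD by (rule measurable_from_subalg[OF vim_subalg[OF Dm]])
  have WM: "W \<in> measurable M NW" using WD by (rule measurable_from_subalg[OF vim_subalg[OF Dm]])
  have A0: "A 0 \<in> sets VX" using A by auto
  have Am: "\<And>m. m \<in> {1..Mc} \<Longrightarrow> A m \<in> sets VX" using A by auto
  define cq where "cq B = real_cond_exp M G (\<lambda>\<omega>. of_bool (xx \<omega> \<in> B))" for B
  have cqG: "cq B \<in> borel_measurable G" for B unfolding cq_def by (rule borel_measurable_cond_exp)
  have cqM: "cq B \<in> borel_measurable M" for B unfolding cq_def by (rule borel_measurable_cond_exp2)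
  have cqb: "AE \<omega> in M. \<bar>cq B \<omega>\<bar> \<le> 1" if B: "B \<in> sets VX" for B
  proof -
    have "(\<lambda>\<omega>. of_bool (xx \<omega> \<in> B) :: real) \<in> borel_measurable M" using xM B by measurable
    then show ?thesis unfolding cq_def by (rule ce01(2)[OF Gs]) simp
  qed
  define IC where "IC \<omega> = (indicator C (W \<omega>) :: real)" for \<omega>
  have ICG: "IC \<in> borel_measurable G" unfolding IC_def using WG C by measurable
  have ICD: "IC \<in> borel_measurable Fd" unfolding IC_def Fd_def using WD C by measurable
  have ICM: "IC \<in> borel_measurable M" unfolding IC_def using WM C by measurable
  have ICb: "\<And>\<omega>. \<bar>IC \<omega>\<bar> \<le> 1" by (simp add: IC_def indicator_def)
  define eD where "eD \<omega> = IC \<omega> * indicator (A 0) (xx \<omega>)" for \<omega>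
  have eDm: "eD \<in> borel_measurable Fd" unfolding eD_def using ICD xD A0 unfolding Fd_def by measurable
  define eS where "eS \<omega> = (of_bool (\<forall>m\<in>{1..Mc}. xt m \<omega> \<in> A m) :: real)" for \<omega>
  have eSm: "eS \<in> borel_measurable M"
  proof -
    have "(\<lambda>\<omega>. \<Prod>m\<in>{1..Mc}. indicator (A m) (xt m \<omega>) :: real) \<in> borel_measurable M"
      by (rule borel_measurable_prod) (use xtm Am in measurable)
    then show ?thesis unfolding eS_def by (simp add: prod_ind)
  qed
  have eS01: "\<And>\<omega>. \<omega> \<in> space M \<Longrightarrow> 0 \<le> eS \<omega> \<and> eS \<omega> \<le> 1" by (simp add: eS_def)
  have pw: "indicator (PiE {0..Mc} A) (\<lambda>k\<in>{0..Mc}. if k = 0 then xx \<omega> else xt k \<omega>) = indicator (A 0) (xx \<omega>) * eS \<omega>" for \<omega>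
  proof -
    have "indicator (PiE {0..Mc} A) (\<lambda>k\<in>{0..Mc}. if k = 0 then xx \<omega> else xt k \<omega>)
        = (\<Prod>k\<in>{0..Mc}. indicator (A k) (if k = 0 then xx \<omega> else xt k \<omega>) :: real)"
      by (rule ind_PiE_restrict) simp
    also have "\<dots> = indicator (A 0) (xx \<omega>) * (\<Prod>k\<in>{1..Mc}. indicator (A k) (if k = 0 then xx \<omega> else xt k \<omega>))"
      by (subst atLeastAtMost_insertL[symmetric, of 0 Mc]) simp_all
    also have "\<dots> = indicator (A 0) (xx \<omega>) * (\<Prod>k\<in>{1..Mc}. indicator (A k) (xt k \<omega>))"
      by (intro arg_cong2[where f="(*)"] refl prod.cong) auto
    also have "\<dots> = indicator (A 0) (xx \<omega>) * eS \<omega>" unfolding eS_def by (simp add: prod_ind)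
    finally show ?thesis .
  qed
  have "(\<integral>\<omega>. indicator C (W \<omega>) * indicator (PiE {0..Mc} A) (\<lambda>k\<in>{0..Mc}. if k = 0 then xx \<omega> else xt k \<omega>) \<partial>M)
      = (\<integral>\<omega>. eD \<omega> * eS \<omega> \<partial>M)"
    unfolding pw eD_def IC_def by (simp add: ac_simps)
  also have "\<dots> = (\<integral>\<omega>. eD \<omega> * real_cond_exp M Fd eS \<omega> \<partial>M)"
  proof (rule intg01[OF Fds eDm _ eSm eS01, symmetric])
    show "AE \<omega> in M. \<bar>eD \<omega>\<bar> \<le> 1" by (rule AE_I2) (simp add: eD_def IC_def indicator_def)
  qed
  also have "\<dots> = (\<integral>\<omega>. eD \<omega> * (\<Prod>m\<in>{1..Mc}. mq (A m) \<omega>) \<partial>M)"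
  proof (rule integral_cong_AE)
    show "(\<lambda>\<omega>. eD \<omega> * real_cond_exp M Fd eS \<omega>) \<in> borel_measurable M"
      using measurable_from_subalg[OF vim_subalg[OF Dm] eDm[unfolded Fd_def]] borel_measurable_cond_exp2
      by (rule borel_measurable_times)
    show "(\<lambda>\<omega>. eD \<omega> * (\<Prod>m\<in>{1..Mc}. mq (A m) \<omega>)) \<in> borel_measurable M"
      using measurable_from_subalg[OF vim_subalg[OF Dm] eDm[unfolded Fd_def]]
      by (rule borel_measurable_times) (rule borel_measurable_prod, use mqm Am in auto)
    have "AE \<omega> in M. cond_prob M D ND (\<lambda>\<omega>'. \<forall>m\<in>{1..Mc}. xt m \<omega>' \<in> A m) \<omega> = (\<Prod>m\<in>{1..Mc}. mq (A m) \<omega>)"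
      by (rule samp) (rule Am)
    then show "AE \<omega> in M. eD \<omega> * real_cond_exp M Fd eS \<omega> = eD \<omega> * (\<Prod>m\<in>{1..Mc}. mq (A m) \<omega>)"
      unfolding cond_prob_def gen_sigma_def Fd_def eS_def by eventually_elim simp
  qed
  also have "\<dots> = (\<integral>\<omega>. (IC \<omega> * (\<Prod>m\<in>{1..Mc}. cq (A m) \<omega>)) * of_bool (xx \<omega> \<in> A 0) \<partial>M)"
  proof (rule integral_cong_AE)
    show "(\<lambda>\<omega>. eD \<omega> * (\<Prod>m\<in>{1..Mc}. mq (A m) \<omega>)) \<in> borel_measurable M"
      using measurable_from_subalg[OF vim_subalg[OF Dm] eDm[unfolded Fd_def]]
      by (rule borel_measurable_times) (rule borel_measurable_prod, use mqm Am in auto)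
    have "(\<lambda>\<omega>. IC \<omega> * (\<Prod>m\<in>{1..Mc}. cq (A m) \<omega>)) \<in> borel_measurable M"
      using ICM by (rule borel_measurable_times) (rule borel_measurable_prod, rule cqM)
    then show "(\<lambda>\<omega>. (IC \<omega> * (\<Prod>m\<in>{1..Mc}. cq (A m) \<omega>)) * of_bool (xx \<omega> \<in> A 0)) \<in> borel_measurable M"
      using xM A0 by measurable
    have "AE \<omega> in M. \<forall>m\<in>{1..Mc}. mq (A m) \<omega> = cq (A m) \<omega>"
      by (rule AE_finite_allI) (use mqG Am in \<open>auto simp: cq_def\<close>)
    then show "AE \<omega> in M. eD \<omega> * (\<Prod>m\<in>{1..Mc}. mq (A m) \<omega>) = (IC \<omega> * (\<Prod>m\<in>{1..Mc}. cq (A m) \<omega>)) * of_bool (xx \<omega> \<in> A 0)"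
      by eventually_elim (simp add: eD_def indicator_def)
  qed
  also have "\<dots> = (\<integral>\<omega>. (IC \<omega> * (\<Prod>m\<in>{1..Mc}. cq (A m) \<omega>)) * cq (A 0) \<omega> \<partial>M)"
    unfolding cq_def
  proof (rule intg01[OF Gs _ _ _ , symmetric])
    show "(\<lambda>\<omega>. IC \<omega> * (\<Prod>m\<in>{1..Mc}. real_cond_exp M G (\<lambda>\<omega>. of_bool (xx \<omega> \<in> A m)) \<omega>)) \<in> borel_measurable G"
      using ICG by (rule borel_measurable_times) (rule borel_measurable_prod, rule borel_measurable_cond_exp)
    have "AE \<omega> in M. \<forall>m\<in>{1..Mc}. \<bar>cq (A m) \<omega>\<bar> \<le> 1"
      by (rule AE_finite_allI) (use cqb Am in auto)
    then show "AE \<omega> in M. \<bar>IC \<omega> * (\<Prod>m\<in>{1..Mc}. real_cond_exp M G (\<lambda>\<omega>. of_bool (xx \<omega> \<in> A m)) \<omega>)\<bar> \<le> 1"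
      unfolding cq_def[symmetric]
    proof eventually_elim
      case (elim \<omega>)
      then have "\<bar>\<Prod>m\<in>{1..Mc}. cq (A m) \<omega>\<bar> \<le> 1" by (intro abs_prod_le1) auto
      then show ?case using ICb[of \<omega>] by (simp add: abs_mult mult_le_one)
    qed
    show "(\<lambda>\<omega>. of_bool (xx \<omega> \<in> A 0) :: real) \<in> borel_measurable M" using xM A0 by measurable
  qed simp
  also have "\<dots> = (\<integral>\<omega>. indicator C (W \<omega>) * (\<Prod>k\<in>{0..Mc}. mq (A k) \<omega>) \<partial>M)"
  proof (rule integral_cong_AE)
    have "(\<lambda>\<omega>. IC \<omega> * (\<Prod>m\<in>{1..Mc}. cq (A m) \<omega>)) \<in> borel_measurable M"
      using ICM by (rule borel_measurable_times) (rule borel_measurable_prod, rule cqM)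
    then show "(\<lambda>\<omega>. (IC \<omega> * (\<Prod>m\<in>{1..Mc}. cq (A m) \<omega>)) * cq (A 0) \<omega>) \<in> borel_measurable M"
      by (rule borel_measurable_times) (rule cqM)
    show "(\<lambda>\<omega>. indicator C (W \<omega>) * (\<Prod>k\<in>{0..Mc}. mq (A k) \<omega>)) \<in> borel_measurable M"
      using ICM[unfolded IC_def] by (rule borel_measurable_times) (rule borel_measurable_prod, use mqm A in auto)
    have "AE \<omega> in M. \<forall>m\<in>{0..Mc}. mq (A m) \<omega> = cq (A m) \<omega>"
      by (rule AE_finite_allI) (use mqG A in \<open>auto simp: cq_def\<close>)
    then show "AE \<omega> in M. (IC \<omega> * (\<Prod>m\<in>{1..Mc}. cq (A m) \<omega>)) * cq (A 0) \<omega> = indicator C (W \<omega>) * (\<Prod>k\<in>{0..Mc}. mq (A k) \<omega>)"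
    proof eventually_elim
      case (elim \<omega>)
      have "(\<Prod>k\<in>{0..Mc}. mq (A k) \<omega>) = mq (A 0) \<omega> * (\<Prod>k\<in>{1..Mc}. mq (A k) \<omega>)"
        by (subst atLeastAtMost_insertL[symmetric, of 0 Mc]) simp_all
      also have "\<dots> = cq (A 0) \<omega> * (\<Prod>k\<in>{1..Mc}. cq (A k) \<omega>)" using elim by simp
      finally show ?case by (simp add: IC_def ac_simps)
    qed
  qed
  finally show ?thesis .
qed

end



lemma swap_bij:
  assumes "j \<in> K" "0 \<in> K"
  shows "bij_betw (\<lambda>k. if k = 0 then j else if k = j then 0 else k) K K"
  by (rule bij_betw_byWitness[where f'="\<lambda>k. if k = 0 then j else if k = j then 0 else k"]) (use assms in auto)

context prob_space begin

lemma swap_from_law: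
  fixes W :: "'a \<Rightarrow> 'w" and XX :: "'a \<Rightarrow> nat \<Rightarrow> 'x" and mq :: "'x set \<Rightarrow> 'a \<Rightarrow> real"
    and Ts :: "'w \<Rightarrow> 'x \<Rightarrow> real"
  assumes K: "finite K" and Wm: "W \<in> measurable M NW" and XXm: "XX \<in> measurable M (PiM K (\<lambda>_. VX))"
    and R: "\<And>C A. C \<in> sets NW \<Longrightarrow> (\<And>k. k \<in> K \<Longrightarrow> A k \<in> sets VX) \<Longrightarrow>
       (\<integral>\<omega>. indicator C (W \<omega>) * indicator (PiE K A) (XX \<omega>) \<partial>M)
     = (\<integral>\<omega>. indicator C (W \<omega>) * (\<Prod>k\<in>K. mq (A k) \<omega>) \<partial>M)"
    and Tsm: "(\<lambda>p. Ts (fst p) (snd p)) \<in> borel_measurable (NW \<Otimes>\<^sub>M VX)"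
    and j: "j \<in> K" and z: "0 \<in> K"
  shows "prob {\<omega>\<in>space M. (\<Sum>k\<in>K. of_bool (Ts (W \<omega>) (XX \<omega> j) \<le> Ts (W \<omega>) (XX \<omega> k)) :: real) \<le> c}
       = prob {\<omega>\<in>space M. (\<Sum>k\<in>K. of_bool (Ts (W \<omega>) (XX \<omega> 0) \<le> Ts (W \<omega>) (XX \<omega> k)) :: real) \<le> c}"
proof -
  define \<pi> where "\<pi> = (\<lambda>k. if k = 0 then j else if k = j then 0 else k)"
  have \<pi>: "bij_betw \<pi> K K" unfolding \<pi>_def by (rule swap_bij[OF j z])
  define F where "F p = (\<Sum>k\<in>K. of_bool (Ts (fst p) (snd p 0) \<le> Ts (fst p) (snd p k)) :: real)" for p :: "'w \<times> (nat \<Rightarrow> 'x)"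
  have comp: "(\<lambda>p. Ts (fst p) (snd p k)) \<in> borel_measurable (NW \<Otimes>\<^sub>M PiM K (\<lambda>_. VX))" if k: "k \<in> K" for k
  proof -
    have "(\<lambda>p. (fst p, snd p k)) \<in> measurable (NW \<Otimes>\<^sub>M PiM K (\<lambda>_. VX)) (NW \<Otimes>\<^sub>M VX)"
      using measurable_component_singleton[OF k, of "\<lambda>_. VX"] by measurable
    from measurable_compose[OF this Tsm] show ?thesis by simp
  qed
  have Fm: "F \<in> borel_measurable (NW \<Otimes>\<^sub>M PiM K (\<lambda>_. VX))" unfolding F_def
    by (rule borel_measurable_sum) (use comp[OF z] comp in measurable)
  define T where "T = {p \<in> space (NW \<Otimes>\<^sub>M PiM K (\<lambda>_. VX)). F p \<le> c}"
  have T: "T \<in> sets (NW \<Otimes>\<^sub>M PiM K (\<lambda>_. VX))" unfolding T_def using Fm by measurable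
  have L: "prob {\<omega>\<in>space M. (W \<omega>, XX \<omega>) \<in> T} = prob {\<omega>\<in>space M. (W \<omega>, \<lambda>k\<in>K. XX \<omega> (\<pi> k)) \<in> T}"
    by (rule law_swap[OF K Wm XXm R \<pi> T])
  have s1: "{\<omega>\<in>space M. (W \<omega>, XX \<omega>) \<in> T}
      = {\<omega>\<in>space M. (\<Sum>k\<in>K. of_bool (Ts (W \<omega>) (XX \<omega> 0) \<le> Ts (W \<omega>) (XX \<omega> k)) :: real) \<le> c}"
    using measurable_space[OF Wm] measurable_space[OF XXm]
    by (auto simp: T_def F_def space_pair_measure)
  have XPm: "(\<lambda>\<omega>. \<lambda>k\<in>K. XX \<omega> (\<pi> k)) \<in> measurable M (PiM K (\<lambda>_. VX))"
  proof (rule measurable_restrict)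
    fix k assume k: "k \<in> K"
    then have "\<pi> k \<in> K" using \<pi> by (auto simp: bij_betw_def)
    then show "(\<lambda>\<omega>. XX \<omega> (\<pi> k)) \<in> measurable M VX"
      using measurable_compose[OF XXm measurable_component_singleton] by blast
  qed
  have sumeq: "(\<Sum>k\<in>K. of_bool (Ts (W \<omega>) (XX \<omega> (\<pi> 0)) \<le> Ts (W \<omega>) (XX \<omega> (\<pi> k))) :: real)
      = (\<Sum>k\<in>K. of_bool (Ts (W \<omega>) (XX \<omega> j) \<le> Ts (W \<omega>) (XX \<omega> k)))" for \<omega>
    using sum.reindex_bij_betw[OF \<pi>, of "\<lambda>k. of_bool (Ts (W \<omega>) (XX \<omega> j) \<le> Ts (W \<omega>) (XX \<omega> k)) :: real"]
    by (simp add: \<pi>_def)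
  have s2: "{\<omega>\<in>space M. (W \<omega>, \<lambda>k\<in>K. XX \<omega> (\<pi> k)) \<in> T}
      = {\<omega>\<in>space M. (\<Sum>k\<in>K. of_bool (Ts (W \<omega>) (XX \<omega> j) \<le> Ts (W \<omega>) (XX \<omega> k)) :: real) \<le> c}"
  proof -
    have "(W \<omega>, \<lambda>k\<in>K. XX \<omega> (\<pi> k)) \<in> T \<longleftrightarrow> (\<Sum>k\<in>K. of_bool (Ts (W \<omega>) (XX \<omega> j) \<le> Ts (W \<omega>) (XX \<omega> k)) :: real) \<le> c"
      if \<omega>: "\<omega> \<in> space M" for \<omega>
    proof -
      have sp: "(W \<omega>, \<lambda>k\<in>K. XX \<omega> (\<pi> k)) \<in> space (NW \<Otimes>\<^sub>M PiM K (\<lambda>_. VX))"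
        using measurable_space[OF Wm \<omega>] measurable_space[OF XPm \<omega>] by (simp add: space_pair_measure)
      have "F (W \<omega>, \<lambda>k\<in>K. XX \<omega> (\<pi> k)) = (\<Sum>k\<in>K. of_bool (Ts (W \<omega>) (XX \<omega> (\<pi> 0)) \<le> Ts (W \<omega>) (XX \<omega> (\<pi> k))))"
        unfolding F_def using z by (intro sum.cong) auto
      then show ?thesis using sp sumeq[of \<omega>] by (simp add: T_def)
    qed
    then show ?thesis by auto
  qed
  show ?thesis using L unfolding s1 s2 by simp
qed

lemma rank_final:
  fixes V :: "nat \<Rightarrow> 'a \<Rightarrow> real"
  assumes Vm: "\<And>k. k \<in> {0..Mc} \<Longrightarrow> V k \<in> borel_measurable M"
    and swap: "\<And>j. j \<in> {0..Mc} \<Longrightarrow> prob {\<omega>\<in>space M. (\<Sum>k\<in>{0..Mc}. of_bool (V j \<omega> \<le> V k \<omega>) :: real) \<le> \<alpha> * (real Mc + 1)}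
        = prob {\<omega>\<in>space M. (\<Sum>k\<in>{0..Mc}. of_bool (V 0 \<omega> \<le> V k \<omega>) :: real) \<le> \<alpha> * (real Mc + 1)}"
    and a: "0 \<le> \<alpha>"
  shows "prob {\<omega>\<in>space M. (\<Sum>k\<in>{0..Mc}. of_bool (V 0 \<omega> \<le> V k \<omega>) :: real) \<le> \<alpha> * (real Mc + 1)} \<le> \<alpha>"
proof -
  define c where "c = \<alpha> * (real Mc + 1)"
  define G where "G j = {\<omega>\<in>space M. (\<Sum>k\<in>{0..Mc}. of_bool (V j \<omega> \<le> V k \<omega>) :: real) \<le> c}" for j
  have Gm: "G j \<in> sets M" if j: "j \<in> {0..Mc}" for j
  proof -
    have "(\<lambda>\<omega>. (\<Sum>k\<in>{0..Mc}. of_bool (V j \<omega> \<le> V k \<omega>) :: real)) \<in> borel_measurable M"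
      by (rule borel_measurable_sum) (use Vm j in measurable)
    then show ?thesis unfolding G_def by measurable
  qed
  have c0: "0 \<le> c" unfolding c_def using a by simp
  have cardeq: "(\<Sum>k\<in>{0..Mc}. of_bool (V j \<omega> \<le> V k \<omega>) :: real) = real (card {k\<in>{0..Mc}. V j \<omega> \<le> V k \<omega>})" for j \<omega>
    by (simp only: sum_of_bool_eq[OF finite_atLeastAtMost finite_atLeastAtMost] Int_def mem_Collect_eq)
  have pw: "(\<Sum>j\<in>{0..Mc}. indicator (G j) \<omega>) \<le> c" if \<omega>: "\<omega> \<in> space M" for \<omega>
  proof -
    have "(\<Sum>j\<in>{0..Mc}. indicator (G j) \<omega> :: real) = (\<Sum>j\<in>{0..Mc}. of_bool (real (card {k\<in>{0..Mc}. V j \<omega> \<le> V k \<omega>}) \<le> c))"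
    proof (rule sum.cong[OF refl])
      fix j assume "j \<in> {0..Mc}"
      show "indicator (G j) \<omega> = (of_bool (real (card {k\<in>{0..Mc}. V j \<omega> \<le> V k \<omega>}) \<le> c) :: real)"
        using \<omega> unfolding G_def indicator_def cardeq by simp
    qed
    also have "\<dots> = real (card {j\<in>{0..Mc}. real (card {k\<in>{0..Mc}. V j \<omega> \<le> V k \<omega>}) \<le> c})"
      by (simp only: sum_of_bool_eq[OF finite_atLeastAtMost finite_atLeastAtMost] Int_def mem_Collect_eq)
    also have "\<dots> \<le> c" by (rule count_bound[OF finite_atLeastAtMost c0])
    finally show ?thesis .
  qed
  have Gi: "integrable M (indicator (G j) :: 'a \<Rightarrow> real)" if "j \<in> {0..Mc}" for j
    by (rule integrable_real_indicator) (use Gm[OF that] in \<open>auto simp: emeasure_finite less_top[symmetric]\<close>)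
  have "(\<Sum>j\<in>{0..Mc}. prob (G j)) = (\<Sum>j\<in>{0..Mc}. prob (G 0))"
    unfolding G_def c_def by (rule sum.cong[OF refl], rule swap, assumption)
  then have "(real Mc + 1) * prob (G 0) = (\<Sum>j\<in>{0..Mc}. prob (G j))" by simp
  also have "\<dots> = (\<Sum>j\<in>{0..Mc}. \<integral>\<omega>. indicator (G j) \<omega> \<partial>M)"
    using Gm by (intro sum.cong refl) (simp add: Int_absorb2 sets.sets_into_space)
  also have "\<dots> = (\<integral>\<omega>. (\<Sum>j\<in>{0..Mc}. indicator (G j) \<omega>) \<partial>M)"
    by (rule Bochner_Integration.integral_sum[symmetric]) (rule Gi)
  also have "\<dots> \<le> (\<integral>\<omega>. c \<partial>M)"
    by (rule integral_mono) (use Gi pw in auto)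
  also have "\<dots> = c" by (simp add: prob_space)
  finally have "(real Mc + 1) * prob (G 0) \<le> (real Mc + 1) * \<alpha>" unfolding c_def by (simp add: mult.commute)
  then have "prob (G 0) \<le> \<alpha>" by (rule mult_left_le_imp_le) simp
  then show ?thesis unfolding G_def c_def .
qed

end



theorem theorem1:
  fixes P :: "'a measure"
    and n Mc :: nat
    and Yv Xv :: "nat \<Rightarrow> 'a \<Rightarrow> real"
    and Zv :: "nat \<Rightarrow> 'a \<Rightarrow> real ^ 'p"
    and g :: "real ^ 'p \<Rightarrow> 'g :: euclidean_space"
    and h :: "real ^ 'p \<Rightarrow> 'h :: euclidean_space"
    and T :: "(nat \<Rightarrow> real) \<Rightarrow> (nat \<Rightarrow> real) \<Rightarrow> (nat \<Rightarrow> 'g) \<Rightarrow> (nat \<Rightarrow> 'h) \<Rightarrow> real"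
    and Q :: "(nat \<Rightarrow> real ^ 'p) \<Rightarrow> (nat \<Rightarrow> real) measure"
    and xt :: "nat \<Rightarrow> 'a \<Rightarrow> nat \<Rightarrow> real"
  defines "y \<equiv> rvec n Yv"
    and "x \<equiv> rvec n Xv"
    and "Zm \<equiv> rvec n Zv"
    and "gZ \<equiv> (\<lambda>\<omega>. vmap n g (rvec n Zv \<omega>))"
    and "hZ \<equiv> (\<lambda>\<omega>. vmap n h (rvec n Zv \<omega>))"
    and "D \<equiv> (\<lambda>\<omega>. (rvec n Yv \<omega>, rvec n Xv \<omega>, rvec n Zv \<omega>))"
  assumes P: "prob_space P"
    \<comment> \<open>the observations are random variables\<close>
    and meas_Y: "\<And>i. i < n \<Longrightarrow> Yv i \<in> borel_measurable P"
    and meas_X: "\<And>i. i < n \<Longrightarrow> Xv i \<in> borel_measurable P"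
    and meas_Z: "\<And>i. i < n \<Longrightarrow> Zv i \<in> borel_measurable P"
    \<comment> \<open>(Y_i, X_i, Z_i) are i.i.d.\<close>
    and indep: "prob_space.indep_vars P (\<lambda>_. borel \<Otimes>\<^sub>M borel \<Otimes>\<^sub>M borel)
                  (\<lambda>i \<omega>. (Yv i \<omega>, Xv i \<omega>, Zv i \<omega>)) {..<n}"
    and ident: "\<And>i. i < n \<Longrightarrow>
        distr P (borel \<Otimes>\<^sub>M borel \<Otimes>\<^sub>M borel) (\<lambda>\<omega>. (Yv i \<omega>, Xv i \<omega>, Zv i \<omega>))
      = distr P (borel \<Otimes>\<^sub>M borel \<Otimes>\<^sub>M borel) (\<lambda>\<omega>. (Yv 0 \<omega>, Xv 0 \<omega>, Zv 0 \<omega>))"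
    \<comment> \<open>null hypothesis H0: X \<perp> Y | Z\<close>
    and H0: "\<And>i. i < n \<Longrightarrow> cond_indep P (Xv i) borel (Yv i) borel (Zv i) borel"
    \<comment> \<open>fixed measurable functions g, h and test statistic T\<close>
    and meas_g: "g \<in> borel_measurable borel"
    and meas_h: "h \<in> borel_measurable borel"
    and meas_T: "(\<lambda>(a, b, c, d). T a b c d) \<in> borel_measurable
        (vecM n borel \<Otimes>\<^sub>M vecM n borel \<Otimes>\<^sub>M vecM n borel \<Otimes>\<^sub>M vecM n borel)"
    and Mc: "Mc \<ge> 1"
    \<comment> \<open>Q(.|Z) is a probability kernel from Z to R^n\<close>
    and Q_kernel: "Q \<in> vecM n borel \<rightarrow>\<^sub>M prob_algebra (vecM n borel)"
    and meas_xt: "\<And>m. m \<in> {1..Mc} \<Longrightarrow> xt m \<in> P \<rightarrow>\<^sub>M vecM n borel"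
    \<comment> \<open>conditionally on D, x^(1),...,x^(M) are i.i.d. with law Q(.|Z)\<close>
    and sampling: "\<And>A. (\<And>m. m \<in> {1..Mc} \<Longrightarrow> A m \<in> sets (vecM n borel)) \<Longrightarrow>
        AE \<omega> in P. cond_prob P D (vecM n borel \<Otimes>\<^sub>M vecM n borel \<Otimes>\<^sub>M vecM n borel)
                       (\<lambda>\<omega>'. \<forall>m\<in>{1..Mc}. xt m \<omega>' \<in> A m) \<omega>
                   = (\<Prod>m\<in>{1..Mc}. measure (Q (Zm \<omega>)) (A m))"
    and cases:
      "(\<forall>A\<in>sets (vecM n borel). AE \<omega> in P.
           measure (Q (Zm \<omega>)) A = cond_prob P Zm (vecM n borel) (\<lambda>\<omega>'. x \<omega>' \<in> A) \<omega>)
     \<or> ((\<exists>Q'. \<forall>z\<in>space (vecM n borel). Q z = Q' (vmap n g z) (vmap n h z))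
        \<and> (\<forall>A\<in>sets (vecM n borel). AE \<omega> in P.
             measure (Q (Zm \<omega>)) A
           = cond_prob P (\<lambda>\<omega>'. (gZ \<omega>', hZ \<omega>')) (vecM n borel \<Otimes>\<^sub>M vecM n borel)
               (\<lambda>\<omega>'. x \<omega>' \<in> A) \<omega>)
        \<and> cond_indep P Zm (vecM n borel) y (vecM n borel) gZ (vecM n borel))"
    and alpha: "0 \<le> \<alpha>" "\<alpha> \<le> 1"
  shows "measure P {\<omega> \<in> space P.
           p_maxway Mc T (y \<omega>) (x \<omega>) (\<lambda>m. xt m \<omega>) (gZ \<omega>) (hZ \<omega>) \<le> \<alpha>} \<le> \<alpha>"
proof -
  interpret prob_space P by (rule P)
  interpret V: vsetup2 P n Yv Xv Zv borel g h
    by unfold_locales (use meas_Y meas_X meas_Z indep H0 meas_g meas_h in auto)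
  let ?VX = "PiM {..<n} (\<lambda>_. borel :: real measure)"
  let ?VZ = "PiM {..<n} (\<lambda>_. borel :: (real ^ 'p) measure)"
  let ?VG = "PiM {..<n} (\<lambda>_. borel :: 'g measure)"
  let ?VH = "PiM {..<n} (\<lambda>_. borel :: 'h measure)"
  have x_eq: "x = V.xx" unfolding x_def V.xx_def ..
  have y_eq: "y = V.yy" unfolding y_def V.yy_def ..
  have Z_eq: "Zm = V.zz" unfolding Zm_def V.zz_def ..
  have g_eq: "gZ = V.gz" unfolding gZ_def V.gz_def V.zz_def ..
  have h_eq: "hZ = V.hz" unfolding hZ_def V.hz_def V.zz_def ..
  have D_eq: "D = (\<lambda>\<omega>. (V.yy \<omega>, V.xx \<omega>, V.zz \<omega>))" unfolding D_def V.xx_def V.yy_def V.zz_def ..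
  define K where "K = {0..Mc}"
  define XX where "XX \<omega> = (\<lambda>k\<in>K. if k = 0 then V.xx \<omega> else xt k \<omega>)" for \<omega>
  define W where "W \<omega> = (V.yy \<omega>, V.gz \<omega>, V.hz \<omega>)" for \<omega>
  define mq where "mq A \<omega> = measure (Q (V.zz \<omega>)) A" for A \<omega>
  have Qm: "Q \<in> ?VZ \<rightarrow>\<^sub>M prob_algebra ?VX" using Q_kernel unfolding vecM_def .
  have mqm: "mq A \<in> borel_measurable P" if A: "A \<in> sets ?VX" for A
    unfolding mq_def using measurable_compose[OF measurable_compose[OF V.mzz Qm] measurable_measure_prob_algebra[OF A]] .
  have mq01: "0 \<le> mq A \<omega> \<and> mq A \<omega> \<le> 1" if "\<omega> \<in> space P" for A \<omega>
  proof -
    have "Q (V.zz \<omega>) \<in> space (prob_algebra ?VX)"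
      using measurable_space[OF Qm measurable_space[OF V.mzz that]] .
    then have "prob_space (Q (V.zz \<omega>))" by (simp add: space_prob_algebra)
    then show ?thesis unfolding mq_def by (simp add: prob_space.prob_le_1)
  qed
  have xtm: "\<And>m. m \<in> {1..Mc} \<Longrightarrow> xt m \<in> measurable P ?VX" using meas_xt unfolding vecM_def .
  define ND where "ND = ?VX \<Otimes>\<^sub>M ?VX \<Otimes>\<^sub>M ?VZ"
  define D' where "D' \<omega> = (V.yy \<omega>, V.xx \<omega>, V.zz \<omega>)" for \<omega>
  have Dm: "D' \<in> measurable P ND" unfolding D'_def ND_def using V.mxx V.myy V.mzz by measurable
  define NW where "NW = ?VX \<Otimes>\<^sub>M ?VG \<Otimes>\<^sub>M ?VH"
  have WD: "W \<in> measurable (vimage_algebra (space P) D' ND) NW"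
  proof -
    have "(\<lambda>t. (fst t, vmap n g (snd (snd t)), vmap n h (snd (snd t)))) \<in> measurable ND NW"
      unfolding ND_def NW_def using V.mvg V.mvh by measurable
    from vim_comp[OF Dm this] show ?thesis by (simp add: W_def[abs_def] D'_def V.gz_def V.hz_def)
  qed
  have xD: "V.xx \<in> measurable (vimage_algebra (space P) D' ND) ?VX"
  proof -
    have "(\<lambda>t. fst (snd t)) \<in> measurable ND ?VX" unfolding ND_def by measurable
    from vim_comp[OF Dm this] show ?thesis by (simp add: D'_def)
  qed
  have samp: "AE \<omega> in P. cond_prob P D' ND (\<lambda>\<omega>'. \<forall>m\<in>{1..Mc}. xt m \<omega>' \<in> A m) \<omega> = (\<Prod>m\<in>{1..Mc}. mq (A m) \<omega>)"
    if A: "\<And>m. m \<in> {1..Mc} \<Longrightarrow> A m \<in> sets ?VX" for A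
    using sampling[of A] A unfolding vecM_def D_eq Z_eq mq_def ND_def D'_def[symmetric] by simp
  have Wm: "W \<in> measurable P NW"
    using WD by (rule measurable_from_subalg[OF vim_subalg[OF Dm]])
  have XXm: "XX \<in> measurable P (PiM K (\<lambda>_. ?VX))" unfolding XX_def
  proof (rule measurable_restrict)
    fix k assume k: "k \<in> K"
    show "(\<lambda>\<omega>. if k = 0 then V.xx \<omega> else xt k \<omega>) \<in> measurable P ?VX"
    proof (cases "k = 0")
      case True then show ?thesis using V.mxx by simp
    next
      case False then have "k \<in> {1..Mc}" using k by (auto simp: K_def)
      then show ?thesis using xtm[of k] False by simp
    qed
  qed
  have R: "(\<integral>\<omega>. indicator C (W \<omega>) * indicator (PiE K A) (XX \<omega>) \<partial>P)
     = (\<integral>\<omega>. indicator C (W \<omega>) * (\<Prod>k\<in>K. mq (A k) \<omega>) \<partial>P)"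
    if C: "C \<in> sets NW" and A: "\<And>k. k \<in> K \<Longrightarrow> A k \<in> sets ?VX" for C A
  proof -
    have A': "\<And>k. k \<in> {0..Mc} \<Longrightarrow> A k \<in> sets ?VX" using A unfolding K_def .
    from cases show ?thesis
    proof
      assume ci: "\<forall>A\<in>sets (vecM n borel). AE \<omega> in P.
           measure (Q (Zm \<omega>)) A = cond_prob P Zm (vecM n borel) (\<lambda>\<omega>'. x \<omega>' \<in> A) \<omega>"
      define G where "G = vimage_algebra (space P) V.UU (?VX \<Otimes>\<^sub>M ?VZ)"
      have Gs: "sigma_finite_subalgebra P G" unfolding G_def by (rule vim_sub[OF V.mUU])
      have WG: "W \<in> measurable G NW"
      proof -
        have "(\<lambda>t. (fst t, vmap n g (snd t), vmap n h (snd t))) \<in> measurable (?VX \<Otimes>\<^sub>M ?VZ) NW"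
          unfolding NW_def using V.mvg V.mvh by measurable
        from vim_comp[OF V.mUU this] show ?thesis by (simp add: W_def[abs_def] G_def V.UU_def V.gz_def V.hz_def)
      qed
      have mqG: "AE \<omega> in P. mq B \<omega> = real_cond_exp P G (\<lambda>\<omega>. of_bool (V.xx \<omega> \<in> B)) \<omega>"
        if B: "B \<in> sets ?VX" for B
      proof -
        have "AE \<omega> in P. measure (Q (Zm \<omega>)) B = cond_prob P Zm (vecM n borel) (\<lambda>\<omega>'. x \<omega>' \<in> B) \<omega>"
          using ci B unfolding vecM_def by blast
        then have e1: "AE \<omega> in P. mq B \<omega> = V.qZ B \<omega>"
          unfolding mq_def V.qZ_def Z_eq x_eq vecM_def .
        have e2: "AE \<omega> in P. real_cond_exp P G (\<lambda>\<omega>. of_bool (V.xx \<omega> \<in> B)) \<omega> = V.qZ B \<omega>"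
          unfolding G_def by (rule V.D1[OF B])
        from e1 e2 show ?thesis by eventually_elim simp
      qed
      show ?thesis unfolding K_def XX_def[unfolded K_def] K_def
        by (rule fin_rect[OF Gs WG Dm WD xD xtm samp mqm mq01 mqG C A'])
    next
      assume cii: "(\<exists>Q'. \<forall>z\<in>space (vecM n borel). Q z = Q' (vmap n g z) (vmap n h z))
        \<and> (\<forall>A\<in>sets (vecM n borel). AE \<omega> in P.
             measure (Q (Zm \<omega>)) A
           = cond_prob P (\<lambda>\<omega>'. (gZ \<omega>', hZ \<omega>')) (vecM n borel \<Otimes>\<^sub>M vecM n borel)
               (\<lambda>\<omega>'. x \<omega>' \<in> A) \<omega>)
        \<and> cond_indep P Zm (vecM n borel) y (vecM n borel) gZ (vecM n borel)"
      have CIy: "cond_indep P V.zz ?VZ V.yy ?VX V.gz ?VG"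
        using cii unfolding vecM_def Z_eq y_eq g_eq by blast
      define G where "G = vimage_algebra (space P) V.U2 (?VX \<Otimes>\<^sub>M (?VG \<Otimes>\<^sub>M ?VH))"
      have Gs: "sigma_finite_subalgebra P G" unfolding G_def by (rule vim_sub[OF V.mU2])
      have WG: "W \<in> measurable G NW"
      proof -
        have "(\<lambda>t. (fst t, fst (snd t), snd (snd t))) \<in> measurable (?VX \<Otimes>\<^sub>M (?VG \<Otimes>\<^sub>M ?VH)) NW"
          unfolding NW_def by measurable
        from vim_comp[OF V.mU2 this] show ?thesis by (simp add: W_def[abs_def] G_def V.U2_def V.GH_def)
      qed
      have mqG: "AE \<omega> in P. mq B \<omega> = real_cond_exp P G (\<lambda>\<omega>. of_bool (V.xx \<omega> \<in> B)) \<omega>"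
        if B: "B \<in> sets ?VX" for B
      proof -
        have "AE \<omega> in P. measure (Q (Zm \<omega>)) B = cond_prob P (\<lambda>\<omega>'. (gZ \<omega>', hZ \<omega>')) (vecM n borel \<Otimes>\<^sub>M vecM n borel)
               (\<lambda>\<omega>'. x \<omega>' \<in> B) \<omega>"
          using cii B unfolding vecM_def by blast
        then have e1: "AE \<omega> in P. mq B \<omega> = V.qGH B \<omega>"
          unfolding mq_def V.qGH_def V.GH_def Z_eq x_eq g_eq h_eq vecM_def .
        have e2: "AE \<omega> in P. real_cond_exp P G (\<lambda>\<omega>. of_bool (V.xx \<omega> \<in> B)) \<omega> = V.qGH B \<omega>"
          unfolding G_def by (rule V.D2[OF B CIy])
        from e1 e2 show ?thesis by eventually_elim simp
      qed
      show ?thesis unfolding K_def XX_def[unfolded K_def] K_def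
        by (rule fin_rect[OF Gs WG Dm WD xD xtm samp mqm mq01 mqG C A'])
    qed
  qed
  define Ts where "Ts w u = T (fst w) u (fst (snd w)) (snd (snd w))" for w :: "(nat \<Rightarrow> real) \<times> (nat \<Rightarrow> 'g) \<times> (nat \<Rightarrow> 'h)" and u
  have Tsm: "(\<lambda>p. Ts (fst p) (snd p)) \<in> borel_measurable (NW \<Otimes>\<^sub>M ?VX)"
  proof -
    have mT: "(\<lambda>(a, b, c, d). T a b c d) \<in> borel_measurable (?VX \<Otimes>\<^sub>M ?VX \<Otimes>\<^sub>M ?VG \<Otimes>\<^sub>M ?VH)"
      using meas_T unfolding vecM_def .
    have "(\<lambda>p. (fst (fst p), snd p, fst (snd (fst p)), snd (snd (fst p)))) \<in> measurable (NW \<Otimes>\<^sub>M ?VX) (?VX \<Otimes>\<^sub>M ?VX \<Otimes>\<^sub>M ?VG \<Otimes>\<^sub>M ?VH)"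
      unfolding NW_def by measurable
    from measurable_compose[OF this mT] show ?thesis by (simp add: Ts_def case_prod_beta)
  qed
  define VV where "VV k \<omega> = Ts (W \<omega>) (XX \<omega> k)" for k \<omega>
  have fK: "finite K" unfolding K_def by simp
  have z: "0 \<in> K" unfolding K_def by simp
  have VVm: "VV k \<in> borel_measurable P" if k: "k \<in> {0..Mc}" for k
  proof -
    have "(\<lambda>\<omega>. (W \<omega>, XX \<omega> k)) \<in> measurable P (NW \<Otimes>\<^sub>M ?VX)"
      using Wm measurable_compose[OF XXm measurable_component_singleton[of k K]] k unfolding K_def
      by measurable
    from measurable_compose[OF this Tsm] show ?thesis by (simp add: VV_def[abs_def])
  qed
  have main: "prob {\<omega>\<in>space P. (\<Sum>k\<in>{0..Mc}. of_bool (VV 0 \<omega> \<le> VV k \<omega>) :: real) \<le> \<alpha> * (real Mc + 1)} \<le> \<alpha>"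
  proof (rule rank_final[OF VVm _ alpha(1)])
    fix j assume j: "j \<in> {0..Mc}"
    then have jK: "j \<in> K" unfolding K_def .
    show "prob {\<omega>\<in>space P. (\<Sum>k\<in>{0..Mc}. of_bool (VV j \<omega> \<le> VV k \<omega>) :: real) \<le> \<alpha> * (real Mc + 1)}
        = prob {\<omega>\<in>space P. (\<Sum>k\<in>{0..Mc}. of_bool (VV 0 \<omega> \<le> VV k \<omega>) :: real) \<le> \<alpha> * (real Mc + 1)}"
      unfolding VV_def K_def[symmetric]
      by (rule swap_from_law[OF fK Wm XXm R Tsm jK z])
  qed auto
  have seteq: "{\<omega> \<in> space P. p_maxway Mc T (y \<omega>) (x \<omega>) (\<lambda>m. xt m \<omega>) (gZ \<omega>) (hZ \<omega>) \<le> \<alpha>}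
      = {\<omega>\<in>space P. (\<Sum>k\<in>{0..Mc}. of_bool (VV 0 \<omega> \<le> VV k \<omega>) :: real) \<le> \<alpha> * (real Mc + 1)}"
  proof -
    have "(\<Sum>k\<in>{0..Mc}. of_bool (VV 0 \<omega> \<le> VV k \<omega>) :: real)
        = 1 + (\<Sum>m\<in>{1..Mc}. of_bool (T (y \<omega>) (x \<omega>) (gZ \<omega>) (hZ \<omega>) \<le> T (y \<omega>) (xt m \<omega>) (gZ \<omega>) (hZ \<omega>)))" for \<omega>
    proof -
      have "(\<Sum>k\<in>{0..Mc}. of_bool (VV 0 \<omega> \<le> VV k \<omega>) :: real)
          = of_bool (VV 0 \<omega> \<le> VV 0 \<omega>) + (\<Sum>k\<in>{1..Mc}. of_bool (VV 0 \<omega> \<le> VV k \<omega>))"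
        by (subst atLeastAtMost_insertL[symmetric, of 0 Mc]) simp_all
      also have "(\<Sum>k\<in>{1..Mc}. of_bool (VV 0 \<omega> \<le> VV k \<omega>) :: real)
          = (\<Sum>m\<in>{1..Mc}. of_bool (T (y \<omega>) (x \<omega>) (gZ \<omega>) (hZ \<omega>) \<le> T (y \<omega>) (xt m \<omega>) (gZ \<omega>) (hZ \<omega>)))"
        by (intro sum.cong refl) (auto simp: VV_def Ts_def W_def XX_def K_def x_eq y_eq g_eq h_eq)
      finally show ?thesis by simp
    qed
    then show ?thesis
      unfolding p_maxway_def by (auto simp: pos_divide_le_eq add.commute[of "real Mc" 1])
  qed
  show ?thesis using main unfolding seteq .
qed



end
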